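(* Assume $\min\{d_1,\dots,d_{L-1}\}\ge d_{\min}$. Let $(\bm\sigma,\bm\Pi)\in\mathcal B$ and $(\bm\sigma',\bm\Pi')\in\mathcal B$ be arbitrary. Then (i) $\mathcal W_{(\bm\sigma,\bm\Pi)}=\mathcal W_{(\bm\sigma',\bm\Pi')}$ if and only if $\bm\sigma=\bm\sigma'$; (ii) if $\bm\sigma\ne\bm\sigma'$, then $\mathrm{dist}(\mathcal W_{(\bm\sigma,\bm\Pi)},\mathcal W_{(\bm\sigma',\bm\Pi')})\ge\delta_\sigma$.
   Context: Let $L\ge2$, $d_0,\dots,d_L$ positive integers, $d_{\min}=\min\{d_0,d_L\}$, $\lambda>0$, and $y_1\ge\dots\ge y_{d_{\min}}\ge0$. Let $r_Y$ be the number of positive $y_i$, $p_Y$ the number of distinct positive values, $0=s_0<s_1<\dots<s_{p_Y}=r_Y$ with $y_{s_{k-1}+1}=\dots=y_{s_k}>y_{s_k+1}$ (where $y_j=0$ for $j>r_Y$), $h_k=s_k-s_{k-1}$. $\mathcal O^n$: $n\times n$ orthogonal matrices; $\mathcal P^n$: $n\times n$ permutation matrices; $\mathrm{BlkD}$: block diagonal. Define $\mathcal A=\{\bm a\in\mathbb R^{d_{\min}}: a_i^{2L-1}-\sqrt\lambda y_ia_i^{L-1}+\lambda a_i=0,\ a_i\ge0\ \forall i\}$ and $\mathcal B=\{(\bm\sigma,\bm\Pi)\in\mathbb R^{d_{\min}}\times\mathcal P^{d_{\min}}:\exists\bm a\in\mathcal A,\ \bm\sigma=\bm\Pi\bm a,\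 \sigma_1\ge\dots\ge\sigma_{d_{\min}}\}$. For $(\bm\sigma,\bm\Pi)\in\mathcal B$, let $\bm\Sigma_l\in\mathbb R^{d_l\times d_{l-1}}$ have top-left $d_{\min}\times d_{\min}$ block $\mathrm{diag}(\bm\sigma)$ and zeros elsewhere, and let $\mathcal W_{(\bm\sigma,\bm\Pi)}$ be the set of tuples $\bm W=(\bm W_1,\dots,\bm W_L)$, $\bm W_l\in\mathbb R^{d_l\times d_{l-1}}$, for which there exist $\bm Q_l\in\mathcal O^{d_{l-1}}$ ($l=2,\dots,L$), $\bm O_k\in\mathcal O^{h_k}$ ($k\in[p_Y]$), $\bm O_{p_Y+1}\in\mathcal O^{d_0-r_Y}$, $\widehat{\bm O}_{p_Y+1}\in\mathcal O^{d_L-r_Y}$ with $\bm W_1=\bm Q_2\bm\Sigma_1\mathrm{BlkD}(\bm\Pi,\bm I_{d_0-d_{\min}})\mathrm{BlkD}(\bm O_1,\dots,\bm O_{p_Y+1})$, $\bm W_l=\bm Q_{l+1}\bm\Sigma_l\bm Q_l^T$ for $2\le l\le L-1$, and $\bm W_L=\mathrm{BlkD}(\bm O_1^T,\dots,\bm O_{p_Y}^T,\widehat{\bm O}_{p_Y+1}^T)\mathrm{BlkD}(\bm\Pi^T,\bm I_{d_L-d_{\min}})\bm\Sigma_L\bm Q_L^T$. Let $\mathcal Y=\bigcup_{i\in[d_{\min}]}\{\sigma\ge0:\sigma^{2L-1}+\lambda\sigma-\sqrt\lambda y_i\sigma^{L-1}=0\}$ and $\delta_\sigma=\min\{|x-y|:x\ne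 y\in\mathcal Y\}$. For sets, $\mathrm{dist}(\mathcal X,\mathcal X')=\inf_{\bm W\in\mathcal X,\bm W'\in\mathcal X'}(\sum_l\|\bm W_l-\bm W_l'\|_F^2)^{1/2}$. *)

theory Defs
  imports "Jordan_Normal_Form.Matrix" "HOL-Combinatorics.Permutations"
begin

(* All indices below are 0-based: the paper's y_i, sigma_i, a_i (i = 1..d_min)
   are y (i-1), sigma $ (i-1), a $ (i-1).  A tuple W = (W_1,...,W_L) is a list
   of length L with W ! (l-1) = W_l. *)

definition dmin :: "(nat \<Rightarrow> nat) \<Rightarrow> nat \<Rightarrow> nat" where
  "dmin d L = min (d 0) (d L)"

definition orth_mat :: "nat \<Rightarrow> real mat \<Rightarrow> bool" where
  "orth_mat n Q \<longleftrightarrow> Q \<in> carrier_mat n n \<and> transpose_mat Q * Q = 1\<^sub>m n"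

definition perm_mat :: "nat \<Rightarrow> real mat \<Rightarrow> bool" where
  "perm_mat n P \<longleftrightarrow> (\<exists>p. p permutes {..<n} \<and>
      P = mat n n (\<lambda>(i,j). if i = p j then 1 else 0))"

fun blkdiag :: "real mat list \<Rightarrow> real mat" where
  "blkdiag [] = 0\<^sub>m 0 0"
| "blkdiag (A # As) = (let B = blkdiag As in
     four_block_mat A (0\<^sub>m (dim_row A) (dim_col B)) (0\<^sub>m (dim_row B) (dim_col A)) B)"

definition Aset :: "nat \<Rightarrow> nat \<Rightarrow> real \<Rightarrow> (nat \<Rightarrow> real) \<Rightarrow> real vec set" where
  "Aset L m lam y = {a. a \<in> carrier_vec m \<and> (\<forall>i<m. a $ i \<ge> 0 \<and>
      (a $ i) ^ (2*L - 1) - sqrt lam * y i * (a $ i) ^ (L - 1) + lam * a $ i = 0)}"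

definition Bset :: "nat \<Rightarrow> nat \<Rightarrow> real \<Rightarrow> (nat \<Rightarrow> real) \<Rightarrow> (real vec \<times> real mat) set" where
  "Bset L m lam y = {(\<sigma>, Pm). \<sigma> \<in> carrier_vec m \<and> perm_mat m Pm \<and>
      (\<exists>a \<in> Aset L m lam y. \<sigma> = Pm *\<^sub>v a) \<and>
      (\<forall>i j. i \<le> j \<longrightarrow> j < m \<longrightarrow> \<sigma> $ j \<le> \<sigma> $ i)}"

definition rY :: "nat \<Rightarrow> (nat \<Rightarrow> real) \<Rightarrow> nat" where
  "rY m y = card {i. i < m \<and> y i > 0}"

definition pY :: "nat \<Rightarrow> (nat \<Rightarrow> real) \<Rightarrow> nat" where
  "pY m y = card {y i | i. i < m \<and> y i > 0}"

(* y extended by zero: yext m y j = y_{j+1} (1-based), 0 beyond d_min *)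
definition yext :: "nat \<Rightarrow> (nat \<Rightarrow> real) \<Rightarrow> nat \<Rightarrow> real" where
  "yext m y j = (if j < m then y j else 0)"

(* s_0 = 0 and s_1 < ... < s_{p_Y} are the (1-based) positions j \<le> r_Y with
   y_j > y_{j+1} *)
definition sY :: "nat \<Rightarrow> (nat \<Rightarrow> real) \<Rightarrow> nat \<Rightarrow> nat" where
  "sY m y k = (0 # sorted_list_of_set
      {j. 1 \<le> j \<and> j \<le> rY m y \<and> yext m y (j - 1) > yext m y j}) ! k"

definition hY :: "nat \<Rightarrow> (nat \<Rightarrow> real) \<Rightarrow> nat \<Rightarrow> nat" where
  "hY m y k = sY m y k - sY m y (k - 1)"

definition Sig :: "(nat \<Rightarrow> nat) \<Rightarrow> nat \<Rightarrow> real vec \<Rightarrow> nat \<Rightarrow> real mat" where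
  "Sig d L \<sigma> l = mat (d l) (d (l - 1))
      (\<lambda>(i,j). if i = j \<and> i < dmin d L then \<sigma> $ i else 0)"

(* the set \<W>_{(\<sigma>,Pm)};  Q l is Q_l (l = 2..L), Ob k is O_k (k = 1..p_Y+1),
   Oh is \<hat>O_{p_Y+1} *)
definition Wset :: "(nat \<Rightarrow> nat) \<Rightarrow> nat \<Rightarrow> (nat \<Rightarrow> real) \<Rightarrow> real vec \<Rightarrow> real mat
    \<Rightarrow> real mat list set" where
  "Wset d L y \<sigma> Pm = (let m = dmin d L; r = rY m y; p = pY m y in
     {W. length W = L \<and>
       (\<exists>Q Ob Oh.
          (\<forall>l\<in>{2..L}. orth_mat (d (l - 1)) (Q l)) \<and>
          (\<forall>k\<in>{1..p}. orth_mat (hY m y k) (Ob k)) \<and>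
          orth_mat (d 0 - r) (Ob (p + 1)) \<and>
          orth_mat (d L - r) Oh \<and>
          W ! 0 = Q 2 * Sig d L \<sigma> 1
                  * four_block_mat Pm (0\<^sub>m m (d 0 - m)) (0\<^sub>m (d 0 - m) m) (1\<^sub>m (d 0 - m))
                  * blkdiag (map Ob [1..<p + 2]) \<and>
          (\<forall>l\<in>{2..L - 1}. W ! (l - 1) = Q (l + 1) * Sig d L \<sigma> l * transpose_mat (Q l)) \<and>
          W ! (L - 1) = blkdiag (map (\<lambda>k. transpose_mat (Ob k)) [1..<p + 1] @ [transpose_mat Oh])
                  * four_block_mat (transpose_mat Pm) (0\<^sub>m m (d L - m)) (0\<^sub>m (d L - m) m) (1\<^sub>m (d L - m))
                  * Sig d L \<sigma> L * transpose_mat (Q L))})"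

definition frob_sq :: "real mat \<Rightarrow> real" where
  "frob_sq A = (\<Sum>i<dim_row A. \<Sum>j<dim_col A. (A $$ (i,j))^2)"

definition set_dist :: "nat \<Rightarrow> real mat list set \<Rightarrow> real mat list set \<Rightarrow> real" where
  "set_dist L X X' = Inf {sqrt (\<Sum>l<L. frob_sq (W ! l - W' ! l)) | W W'. W \<in> X \<and> W' \<in> X'}"

definition Yset :: "nat \<Rightarrow> nat \<Rightarrow> real \<Rightarrow> (nat \<Rightarrow> real) \<Rightarrow> real set" where
  "Yset L m lam y = (\<Union>i<m. {s. s \<ge> 0 \<and>
      s ^ (2*L - 1) + lam * s - sqrt lam * y i * s ^ (L - 1) = 0})"

definition delta_sigma :: "nat \<Rightarrow> nat \<Rightarrow> real \<Rightarrow> (nat \<Rightarrow> real) \<Rightarrow> real" where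
  "delta_sigma L m lam y = Inf {\<bar>x - x'\<bar> | x x'. x \<in> Yset L m lam y \<and> x' \<in> Yset L m lam y \<and> x \<noteq> x'}"

end

theory Submission
  imports Defs "Jordan_Normal_Form.Determinant"
begin


lemma mult_entry:
  fixes A B :: "real mat"
  assumes "A \<in> carrier_mat a n" "B \<in> carrier_mat n c" "i < a" "j < c"
  shows "(A * B) $$ (i,j) = (\<Sum>k<n. A $$ (i,k) * B $$ (k,j))"
  using assms by (auto simp: scalar_prod_def intro!: sum.cong)

lemma orth_carrier: "orth_mat n Q \<Longrightarrow> Q \<in> carrier_mat n n"
  by (simp add: orth_mat_def)

lemma orth_right: assumes "orth_mat n Q" shows "Q * transpose_mat Q = 1\<^sub>m n"
  using assms mat_mult_left_right_inverse[of "transpose_mat Q" n Q]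
  by (auto simp: orth_mat_def)

lemma orth_transpose: assumes "orth_mat n Q" shows "orth_mat n (transpose_mat Q)"
  using orth_right[OF assms] assms by (auto simp: orth_mat_def)

lemma orth_mult: assumes "orth_mat n A" "orth_mat n B" shows "orth_mat n (A * B)"
proof -
  have A: "A \<in> carrier_mat n n" and B: "B \<in> carrier_mat n n" using assms by (auto simp: orth_mat_def)
  have At: "transpose_mat A \<in> carrier_mat n n" and Bt: "transpose_mat B \<in> carrier_mat n n" using A B by auto
  have "transpose_mat (A * B) * (A * B) = transpose_mat B * ((transpose_mat A * A) * B)"
    using A B At Bt assoc_mult_mat[OF Bt At mult_carrier_mat[OF A B]] assoc_mult_mat[OF At A B]
    by (simp add: transpose_mult[OF A B])
  also have "\<dots> = 1\<^sub>m n" using assms B by (simp add: orth_mat_def)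
  finally show ?thesis using A B by (simp add: orth_mat_def)
qed

lemma orth_one: "orth_mat n (1\<^sub>m n)" by (simp add: orth_mat_def)

lemma orth_sum_row: assumes "orth_mat n Q" "i < n"
  shows "(\<Sum>k<n. (Q $$ (i,k))^2) = 1"
proof -
  have Q: "Q \<in> carrier_mat n n" using assms by (simp add: orth_mat_def)
  have "(Q * transpose_mat Q) $$ (i,i) = 1" using orth_right[OF assms(1)] assms(2) by simp
  moreover have "(Q * transpose_mat Q) $$ (i,i) = (\<Sum>k<n. (Q $$ (i,k))^2)"
    using mult_entry[of Q n n "transpose_mat Q" n i i] Q assms(2) by (simp add: power2_eq_square)
  ultimately show ?thesis by simp
qed

lemma orth_sum_col: assumes "orth_mat n Q" "i < n"
  shows "(\<Sum>k<n. (Q $$ (k,i))^2) = 1"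
proof -
  have Q: "Q \<in> carrier_mat n n" using assms by (simp add: orth_mat_def)
  have "(transpose_mat Q * Q) $$ (i,i) = 1" using assms by (simp add: orth_mat_def)
  moreover have "(transpose_mat Q * Q) $$ (i,i) = (\<Sum>k<n. (Q $$ (k,i))^2)"
    using mult_entry[of "transpose_mat Q" n n Q n i i] Q assms(2) by (simp add: power2_eq_square)
  ultimately show ?thesis by simp
qed

lemma orth_four: assumes "orth_mat n A" "orth_mat k D"
  shows "orth_mat (n + k) (four_block_mat A (0\<^sub>m n k) (0\<^sub>m k n) D)"
proof -
  have A: "A \<in> carrier_mat n n" and D: "D \<in> carrier_mat k k" using assms by (auto simp: orth_mat_def)
  have "transpose_mat (four_block_mat A (0\<^sub>m n k) (0\<^sub>m k n) D) * four_block_mat A (0\<^sub>m n k) (0\<^sub>m k n) D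
     = four_block_mat (transpose_mat A) (0\<^sub>m n k) (0\<^sub>m k n) (transpose_mat D) * four_block_mat A (0\<^sub>m n k) (0\<^sub>m k n) D"
    using A D by (simp add: transpose_four_block_mat[OF A zero_carrier_mat zero_carrier_mat D])
  also have "\<dots> = four_block_mat (1\<^sub>m n) (0\<^sub>m n k) (0\<^sub>m k n) (1\<^sub>m k)"
    using A D assms by (subst mult_four_block_mat[of _ n n _ k _ k]) (auto simp: orth_mat_def)
  also have "\<dots> = 1\<^sub>m (n + k)" by (intro eq_matI) auto
  finally show ?thesis using A D by (simp add: orth_mat_def)
qed


lemma orth_dims: "orth_mat n Q \<Longrightarrow> dim_row Q = n \<and> dim_col Q = n"
  using orth_carrier carrier_matD by blast

definition sqs :: "real mat list \<Rightarrow> nat list \<Rightarrow> bool" where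
  "sqs As ns \<longleftrightarrow> length As = length ns \<and> (\<forall>k<length As. As ! k \<in> carrier_mat (ns ! k) (ns ! k))"

definition orths :: "real mat list \<Rightarrow> nat list \<Rightarrow> bool" where
  "orths As ns \<longleftrightarrow> length As = length ns \<and> (\<forall>k<length As. orth_mat (ns ! k) (As ! k))"

lemma sqs_Nil[simp]: "sqs [] ns \<longleftrightarrow> ns = []" by (auto simp: sqs_def)
lemma sqs_Cons[simp]: "sqs (A # As) (n # ns) \<longleftrightarrow> A \<in> carrier_mat n n \<and> sqs As ns"
  unfolding sqs_def by (auto simp: nth_Cons split: nat.splits)
lemma sqs_Nil2[simp]: "sqs As [] \<longleftrightarrow> As = []" by (auto simp: sqs_def)
lemma sqs_Cons_Nil[simp]: "\<not> sqs (A # As) []" by (auto simp: sqs_def)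
lemma orths_Nil[simp]: "orths [] ns \<longleftrightarrow> ns = []" by (auto simp: orths_def)
lemma orths_Cons[simp]: "orths (A # As) (n # ns) \<longleftrightarrow> orth_mat n A \<and> orths As ns"
  unfolding orths_def by (auto simp: nth_Cons split: nat.splits)
lemma orths_Cons_Nil[simp]: "\<not> orths (A # As) []" by (auto simp: orths_def)
lemma orths_sqs: "orths As ns \<Longrightarrow> sqs As ns"
  unfolding orths_def sqs_def using orth_carrier by blast

lemma blkdiag_carrier:
  "sqs As ns \<Longrightarrow> blkdiag As \<in> carrier_mat (sum_list ns) (sum_list ns)"
proof (induction As arbitrary: ns)
  case Nil then show ?case by simp
next
  case (Cons A As ns')
  then obtain n ns where ns': "ns' = n # ns" by (cases ns') auto
  have A: "A \<in> carrier_mat n n" and s: "sqs As ns" using Cons.prems ns' by auto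
  have B: "blkdiag As \<in> carrier_mat (sum_list ns) (sum_list ns)" using Cons.IH[OF s] .
  have "blkdiag (A # As) = four_block_mat A (0\<^sub>m (dim_row A) (dim_col (blkdiag As)))
     (0\<^sub>m (dim_row (blkdiag As)) (dim_col A)) (blkdiag As)" by (simp add: Let_def)
  then show ?case using four_block_carrier_mat[OF A B] ns' by simp
qed

lemma blkdiag_Cons: assumes "A \<in> carrier_mat n n" "sqs As ns"
  shows "blkdiag (A # As) = four_block_mat A (0\<^sub>m n (sum_list ns)) (0\<^sub>m (sum_list ns) n) (blkdiag As)"
proof -
  have B: "blkdiag As \<in> carrier_mat (sum_list ns) (sum_list ns)" using blkdiag_carrier[OF assms(2)] .
  have "blkdiag (A # As) = four_block_mat A (0\<^sub>m (dim_row A) (dim_col (blkdiag As)))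
     (0\<^sub>m (dim_row (blkdiag As)) (dim_col A)) (blkdiag As)" by (simp add: Let_def)
  then show ?thesis using assms(1) B by (simp only: carrier_matD)
qed

lemma orth_zero0: "orth_mat 0 (0\<^sub>m 0 0)"
  unfolding orth_mat_def by (auto intro!: eq_matI)

lemma blkdiag_orth:
  "orths As ns \<Longrightarrow> orth_mat (sum_list ns) (blkdiag As)"
proof (induction As arbitrary: ns)
  case Nil then show ?case using orth_zero0 by simp
next
  case (Cons A As ns')
  then obtain n ns where ns': "ns' = n # ns" by (cases ns') auto
  have oA: "orth_mat n A" and s: "orths As ns" using Cons.prems ns' by auto
  have oB: "orth_mat (sum_list ns) (blkdiag As)" using Cons.IH[OF s] .
  have "orth_mat (n + sum_list ns) (four_block_mat A (0\<^sub>m n (sum_list ns)) (0\<^sub>m (sum_list ns) n) (blkdiag As))"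
    by (rule orth_four[OF oA oB])
  then show ?case using blkdiag_Cons[OF orth_carrier[OF oA] orths_sqs[OF s]] ns' by simp
qed

lemma sqs_map2: "sqs As ns \<Longrightarrow> sqs Bs ns \<Longrightarrow> sqs (map2 (*) As Bs) ns"
  unfolding sqs_def by auto

lemma sqs_transpose: "sqs As ns \<Longrightarrow> sqs (map transpose_mat As) ns"
  unfolding sqs_def by auto

lemma blkdiag_mult:
  "sqs As ns \<Longrightarrow> sqs Bs ns \<Longrightarrow> blkdiag As * blkdiag Bs = blkdiag (map2 (*) As Bs)"
proof (induction As arbitrary: Bs ns)
  case Nil then show ?case by (auto intro!: eq_matI)
next
  case (Cons A As Bs' ns')
  then obtain n ns where ns': "ns' = n # ns" by (cases ns') auto
  then obtain B Bs where Bs': "Bs' = B # Bs" using Cons.prems by (cases Bs') auto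
  have A: "A \<in> carrier_mat n n" and sA: "sqs As ns" using Cons.prems ns' by auto
  have B: "B \<in> carrier_mat n n" and sB: "sqs Bs ns" using Cons.prems ns' Bs' by auto
  have IH: "blkdiag As * blkdiag Bs = blkdiag (map2 (*) As Bs)" using Cons.IH[OF sA sB] .
  have cA: "blkdiag As \<in> carrier_mat (sum_list ns) (sum_list ns)" using blkdiag_carrier[OF sA] .
  have cB: "blkdiag Bs \<in> carrier_mat (sum_list ns) (sum_list ns)" using blkdiag_carrier[OF sB] .
  have AB: "A * B \<in> carrier_mat n n" using A B by simp
  have "blkdiag (A # As) * blkdiag (B # Bs) =
      four_block_mat A (0\<^sub>m n (sum_list ns)) (0\<^sub>m (sum_list ns) n) (blkdiag As) *
      four_block_mat B (0\<^sub>m n (sum_list ns)) (0\<^sub>m (sum_list ns) n) (blkdiag Bs)"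
    using blkdiag_Cons[OF A sA] blkdiag_Cons[OF B sB] by simp
  also have "\<dots> = four_block_mat (A * B) (0\<^sub>m n (sum_list ns)) (0\<^sub>m (sum_list ns) n) (blkdiag As * blkdiag Bs)"
    using A B cA cB by (subst mult_four_block_mat[OF A _ _ cA B _ _ cB]) auto
  also have "\<dots> = blkdiag (map2 (*) (A # As) (B # Bs))"
    using blkdiag_Cons[OF AB sqs_map2[OF sA sB]] IH by simp
  finally show ?case using Bs' by simp
qed

lemma blkdiag_transpose:
  "sqs As ns \<Longrightarrow> transpose_mat (blkdiag As) = blkdiag (map transpose_mat As)"
proof (induction As arbitrary: ns)
  case Nil then show ?case by (auto intro!: eq_matI)
next
  case (Cons A As ns')
  then obtain n ns where ns': "ns' = n # ns" by (cases ns') auto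
  have A: "A \<in> carrier_mat n n" and sA: "sqs As ns" using Cons.prems ns' by auto
  have At: "transpose_mat A \<in> carrier_mat n n" using A by simp
  have cA: "blkdiag As \<in> carrier_mat (sum_list ns) (sum_list ns)" using blkdiag_carrier[OF sA] .
  show ?case
    using blkdiag_Cons[OF A sA] blkdiag_Cons[OF At sqs_transpose[OF sA]] Cons.IH[OF sA]
      transpose_four_block_mat[OF A zero_carrier_mat zero_carrier_mat cA]
    by simp
qed

lemma four_block_eq:
  assumes "four_block_mat A B C D = four_block_mat A' B' C' D'"
    "A \<in> carrier_mat n1 m1" "A' \<in> carrier_mat n1 m1" "D \<in> carrier_mat n2 m2" "D' \<in> carrier_mat n2 m2"
  shows "A = A' \<and> D = D'"
proof
  show "A = A'"
  proof (rule eq_matI)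
    fix i j assume "i < dim_row A'" "j < dim_col A'"
    then have ij: "i < n1" "j < m1" using assms(3) by auto
    have "four_block_mat A B C D $$ (i,j) = four_block_mat A' B' C' D' $$ (i,j)" using assms(1) by simp
    then show "A $$ (i,j) = A' $$ (i,j)" using ij assms(2-5) by simp
  next
    show "dim_row A = dim_row A'" "dim_col A = dim_col A'" using assms(2,3) by auto
  qed
  show "D = D'"
  proof (rule eq_matI)
    fix i j assume "i < dim_row D'" "j < dim_col D'"
    then have ij: "i < n2" "j < m2" using assms(5) by auto
    have "four_block_mat A B C D $$ (i+n1,j+m1) = four_block_mat A' B' C' D' $$ (i+n1,j+m1)" using assms(1) by simp
    then show "D $$ (i,j) = D' $$ (i,j)" using ij assms(2-5) by simp
  next
    show "dim_row D = dim_row D'" "dim_col D = dim_col D'" using assms(4,5) by auto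
  qed
qed

lemma blkdiag_inj:
  "sqs As ns \<Longrightarrow> sqs Bs ns \<Longrightarrow> blkdiag As = blkdiag Bs \<Longrightarrow> As = Bs"
proof (induction As arbitrary: Bs ns)
  case Nil then show ?case by auto
next
  case (Cons A As Bs' ns')
  then obtain n ns where ns': "ns' = n # ns" by (cases ns') auto
  then obtain B Bs where Bs': "Bs' = B # Bs" using Cons.prems by (cases Bs') auto
  have A: "A \<in> carrier_mat n n" and sA: "sqs As ns" using Cons.prems ns' by auto
  have B: "B \<in> carrier_mat n n" and sB: "sqs Bs ns" using Cons.prems ns' Bs' by auto
  have cA: "blkdiag As \<in> carrier_mat (sum_list ns) (sum_list ns)" using blkdiag_carrier[OF sA] .
  have cB: "blkdiag Bs \<in> carrier_mat (sum_list ns) (sum_list ns)" using blkdiag_carrier[OF sB] .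
  have "A = B \<and> blkdiag As = blkdiag Bs"
    using four_block_eq[OF _ A B cA cB] Cons.prems(3) Bs' blkdiag_Cons[OF A sA] blkdiag_Cons[OF B sB]
    by simp
  then show ?case using Cons.IH[OF sA sB] Bs' by simp
qed

lemma blkdiag_ones: "blkdiag (map (\<lambda>n. 1\<^sub>m n) ns) = 1\<^sub>m (sum_list ns)"
proof (induction ns)
  case Nil then show ?case by (auto intro!: eq_matI)
next
  case (Cons n ns)
  have s: "sqs (map (\<lambda>n. 1\<^sub>m n) ns) ns" by (auto simp: sqs_def)
  have "blkdiag (map (\<lambda>n. 1\<^sub>m n) (n # ns)) = four_block_mat (1\<^sub>m n) (0\<^sub>m n (sum_list ns)) (0\<^sub>m (sum_list ns) n) (1\<^sub>m (sum_list ns))"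
    using blkdiag_Cons[OF one_carrier_mat s] Cons.IH by simp
  also have "\<dots> = 1\<^sub>m (sum_list (n # ns))" by (auto intro!: eq_matI)
  finally show ?case .
qed

lemma blkdiag_orth_parts:
  assumes "sqs As ns" "orth_mat (sum_list ns) (blkdiag As)"
  shows "orths As ns"
proof -
  let ?At = "map transpose_mat As"
  have "blkdiag (map2 (*) ?At As) = transpose_mat (blkdiag As) * blkdiag As"
    using blkdiag_mult[OF sqs_transpose[OF assms(1)] assms(1)] blkdiag_transpose[OF assms(1)] by simp
  also have "\<dots> = 1\<^sub>m (sum_list ns)" using assms(2) by (simp add: orth_mat_def)
  also have "\<dots> = blkdiag (map (\<lambda>n. 1\<^sub>m n) ns)" by (simp add: blkdiag_ones)
  finally have eq: "blkdiag (map2 (*) ?At As) = blkdiag (map (\<lambda>n. 1\<^sub>m n) ns)" .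
  have s2: "sqs (map (\<lambda>n. 1\<^sub>m n) ns) ns" by (auto simp: sqs_def)
  have L: "map2 (*) ?At As = map (\<lambda>n. 1\<^sub>m n) ns"
    using blkdiag_inj[OF sqs_map2[OF sqs_transpose[OF assms(1)] assms(1)] s2 eq] .
  show ?thesis unfolding orths_def
  proof (intro conjI allI impI)
    show "length As = length ns" using assms(1) by (simp add: sqs_def)
    fix k assume k: "k < length As"
    have c: "As ! k \<in> carrier_mat (ns ! k) (ns ! k)" using assms(1) k by (simp add: sqs_def)
    have "(map2 (*) ?At As) ! k = transpose_mat (As ! k) * As ! k" using k by simp
    moreover have "(map (\<lambda>n. 1\<^sub>m n) ns) ! k = 1\<^sub>m (ns ! k)" using k assms(1) by (simp add: sqs_def)
    ultimately have "transpose_mat (As ! k) * As ! k = 1\<^sub>m (ns ! k)" using L by metis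
    then show "orth_mat (ns ! k) (As ! k)" using c by (simp add: orth_mat_def)
  qed
qed

fun blk :: "nat list \<Rightarrow> nat \<Rightarrow> nat" where
  "blk [] i = 0"
| "blk (n # ns) i = (if i < n then 0 else Suc (blk ns (i - n)))"

lemma blkdiag_decomp:
  "X \<in> carrier_mat (sum_list ns) (sum_list ns) \<Longrightarrow>
   (\<forall>i j. i < sum_list ns \<longrightarrow> j < sum_list ns \<longrightarrow> blk ns i \<noteq> blk ns j \<longrightarrow> X $$ (i,j) = 0) \<Longrightarrow>
   \<exists>Ps. sqs Ps ns \<and> X = blkdiag Ps"
proof (induction ns arbitrary: X)
  case Nil then show ?case by (intro exI[of _ "[]"]) (auto intro!: eq_matI)
next
  case (Cons n ns X)
  let ?N = "sum_list ns"
  define A where "A = mat n n (\<lambda>(i,j). X $$ (i,j))"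
  define D where "D = mat ?N ?N (\<lambda>(i,j). X $$ (i+n,j+n))"
  have "\<forall>i j. i < ?N \<longrightarrow> j < ?N \<longrightarrow> blk ns i \<noteq> blk ns j \<longrightarrow> D $$ (i,j) = 0"
  proof (intro allI impI)
    fix i j assume "i < ?N" "j < ?N" "blk ns i \<noteq> blk ns j"
    then show "D $$ (i,j) = 0" using Cons.prems(2)[rule_format, of "i+n" "j+n"] by (simp add: D_def)
  qed
  then obtain Ps where Ps: "sqs Ps ns" "D = blkdiag Ps"
    using Cons.IH[of D] by (auto simp: D_def)
  have cX: "dim_row X = n + ?N" "dim_col X = n + ?N" using Cons.prems(1) by auto
  have "X = four_block_mat A (0\<^sub>m n ?N) (0\<^sub>m ?N n) D"
  proof (rule eq_matI)
    fix i j assume ij: "i < dim_row (four_block_mat A (0\<^sub>m n ?N) (0\<^sub>m ?N n) D)"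
      "j < dim_col (four_block_mat A (0\<^sub>m n ?N) (0\<^sub>m ?N n) D)"
    then have ij': "i < n + ?N" "j < n + ?N" by (auto simp: A_def D_def)
    show "X $$ (i,j) = four_block_mat A (0\<^sub>m n ?N) (0\<^sub>m ?N n) D $$ (i,j)"
      using ij' Cons.prems(2)[rule_format, of i j] by (auto simp: A_def D_def)
  next
    show "dim_row X = dim_row (four_block_mat A (0\<^sub>m n ?N) (0\<^sub>m ?N n) D)"
      "dim_col X = dim_col (four_block_mat A (0\<^sub>m n ?N) (0\<^sub>m ?N n) D)"
      using cX by (auto simp: A_def D_def)
  qed
  moreover have cA: "A \<in> carrier_mat n n" by (simp add: A_def)
  ultimately have "X = blkdiag (A # Ps)" using blkdiag_Cons[OF cA Ps(1)] Ps by simp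
  then show ?case using Ps cA by (intro exI[of _ "A # Ps"]) auto
qed

lemma blkdiag_snoc:
  "sqs As ns \<Longrightarrow> C \<in> carrier_mat c c \<Longrightarrow>
   blkdiag (As @ [C]) = four_block_mat (blkdiag As) (0\<^sub>m (sum_list ns) c) (0\<^sub>m c (sum_list ns)) C"
proof (induction As arbitrary: ns)
  case Nil
  have s: "sqs [] []" by simp
  show ?case using blkdiag_Cons[OF Nil(2) s] Nil by (auto intro!: eq_matI)
next
  case (Cons A As ns')
  then obtain n ns where ns': "ns' = n # ns" by (cases ns') auto
  have A: "A \<in> carrier_mat n n" and sA: "sqs As ns" using Cons.prems ns' by auto
  have sAC: "sqs (As @ [C]) (ns @ [c])" using sA Cons.prems(2) by (auto simp: sqs_def nth_append)
  have cA: "blkdiag As \<in> carrier_mat (sum_list ns) (sum_list ns)" using blkdiag_carrier[OF sA] .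
  have e1: "blkdiag ((A # As) @ [C]) = four_block_mat A (0\<^sub>m n (sum_list ns + c)) (0\<^sub>m (sum_list ns + c) n)
     (four_block_mat (blkdiag As) (0\<^sub>m (sum_list ns) c) (0\<^sub>m c (sum_list ns)) C)"
    using blkdiag_Cons[OF A sAC] Cons.IH[OF sA Cons.prems(2)] by simp
  have e2: "blkdiag (A # As) = four_block_mat A (0\<^sub>m n (sum_list ns)) (0\<^sub>m (sum_list ns) n) (blkdiag As)"
    using blkdiag_Cons[OF A sA] .
  show ?case unfolding e1 e2 ns' using A cA Cons.prems(2)
    by (intro eq_matI) auto
qed


definition permmat :: "nat \<Rightarrow> (nat \<Rightarrow> nat) \<Rightarrow> real mat" where
  "permmat n f = mat n n (\<lambda>(i,j). if i = f j then 1 else 0)"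

lemma permmat_carrier[simp]: "permmat n f \<in> carrier_mat n n" by (simp add: permmat_def)
lemma permmat_dims[simp]: "dim_row (permmat n f) = n" "dim_col (permmat n f) = n" by (simp_all add: permmat_def)
lemma permmat_index[simp]: "i < n \<Longrightarrow> j < n \<Longrightarrow> permmat n f $$ (i,j) = (if i = f j then 1 else 0)"
  by (simp add: permmat_def)

lemma perm_mat_permmat: "perm_mat n P \<Longrightarrow> \<exists>f. f permutes {..<n} \<and> P = permmat n f"
  unfolding perm_mat_def permmat_def by blast

lemma sum_single: "(\<Sum>k<(n::nat). if k = i then c k else 0) = (if i < n then c i else (0::real))"
proof -
  have "(\<Sum>k<n. if k = i then c k else 0) = (\<Sum>k\<in>{..<n}. if k = i then c i else 0)"
    by (intro sum.cong) auto
  also have "\<dots> = (if i < n then c i else 0)" by (simp add: sum.delta)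
  finally show ?thesis .
qed

lemma permutes_lt: "f permutes {..<n} \<Longrightarrow> j < n \<Longrightarrow> f j < n"
  using permutes_in_image by fastforce

lemma permmat_mult: assumes "\<forall>j<n. g j < n"
  shows "permmat n f * permmat n g = permmat n (f \<circ> g)"
proof (rule eq_matI)
  fix i j assume ij: "i < dim_row (permmat n (f \<circ> g))" "j < dim_col (permmat n (f \<circ> g))"
  then have ij': "i < n" "j < n" by auto
  have "(permmat n f * permmat n g) $$ (i,j) = (\<Sum>k<n. permmat n f $$ (i,k) * permmat n g $$ (k,j))"
    using mult_entry[of "permmat n f" n n "permmat n g" n i j] ij' by simp
  also have "\<dots> = (\<Sum>k<n. if k = g j then (if i = f k then 1 else 0) else 0)"
    using ij' by (intro sum.cong) auto
  also have "\<dots> = (if i = f (g j) then 1 else 0)" using assms ij' by (simp add: sum_single)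
  finally show "(permmat n f * permmat n g) $$ (i,j) = permmat n (f \<circ> g) $$ (i,j)" using ij' by simp
qed auto

lemma permmat_orth: assumes "f permutes {..<n}" shows "orth_mat n (permmat n f)"
  unfolding orth_mat_def
proof (intro conjI permmat_carrier eq_matI)
  fix i j assume ij: "i < dim_row (1\<^sub>m n)" "j < dim_col (1\<^sub>m n)"
  then have ij': "i < n" "j < n" by auto
  have "(transpose_mat (permmat n f) * permmat n f) $$ (i,j) = (\<Sum>k<n. permmat n f $$ (k,i) * permmat n f $$ (k,j))"
    using mult_entry[of "transpose_mat (permmat n f)" n n "permmat n f" n i j] ij' by simp
  also have "\<dots> = (\<Sum>k<n. if k = f i then (if f i = f j then 1 else 0) else 0)"
    using ij' by (intro sum.cong) auto
  also have "\<dots> = (if i = j then 1 else 0)"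
    using permutes_lt[OF assms ij'(1)] permutes_inj[OF assms] by (simp add: sum_single inj_eq)
  finally show "(transpose_mat (permmat n f) * permmat n f) $$ (i,j) = 1\<^sub>m n $$ (i,j)" using ij' by simp
qed auto

lemma permmat_vec: assumes "f permutes {..<n}" "i < n" "a \<in> carrier_vec n"
  shows "(permmat n f *\<^sub>v a) $ i = a $ (Hilbert_Choice.inv f i)"
proof -
  have "(permmat n f *\<^sub>v a) $ i = (\<Sum>k<n. permmat n f $$ (i,k) * a $ k)"
    using assms by (auto simp: scalar_prod_def intro!: sum.cong)
  also have "\<dots> = (\<Sum>k<n. if k = Hilbert_Choice.inv f i then a $ k else 0)"
    using assms by (intro sum.cong) (auto simp: permutes_inverses)
  also have "\<dots> = a $ (Hilbert_Choice.inv f i)"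
    using permutes_lt[OF permutes_inv[OF assms(1)] assms(2)] by (simp add: sum_single)
  finally show ?thesis .
qed

definition Fb :: "nat \<Rightarrow> nat \<Rightarrow> real mat \<Rightarrow> real mat" where
  "Fb N m X = four_block_mat X (0\<^sub>m m (N - m)) (0\<^sub>m (N - m) m) (1\<^sub>m (N - m))"

lemma Fb_carrier: "X \<in> carrier_mat m m \<Longrightarrow> m \<le> N \<Longrightarrow> Fb N m X \<in> carrier_mat N N"
  unfolding Fb_def using four_block_carrier_mat[of X m m "1\<^sub>m (N - m)" "N - m" "N - m"] by simp

lemma Fb_index: "X \<in> carrier_mat m m \<Longrightarrow> m \<le> N \<Longrightarrow> i < N \<Longrightarrow> j < N \<Longrightarrow>
  Fb N m X $$ (i,j) = (if i < m \<and> j < m then X $$ (i,j) else if i < m \<or> j < m then 0 else (if i = j then 1 else 0))"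
  unfolding Fb_def by auto

lemma Fb_mult: assumes "X \<in> carrier_mat m m" "Y \<in> carrier_mat m m" "m \<le> N"
  shows "Fb N m X * Fb N m Y = Fb N m (X * Y)"
  unfolding Fb_def using assms
  by (subst mult_four_block_mat[of X m m _ "N - m" _ "N - m"]) auto

lemma Fb_transpose: assumes "X \<in> carrier_mat m m"
  shows "transpose_mat (Fb N m X) = Fb N m (transpose_mat X)"
  unfolding Fb_def using assms
  by (subst transpose_four_block_mat[of X m m _ "N - m" _ "N - m"]) auto

lemma Fb_orth: assumes "orth_mat m X" "m \<le> N" shows "orth_mat N (Fb N m X)"
  using orth_four[OF assms(1) orth_one[of "N - m"]] assms(2) unfolding Fb_def by simp

lemma Sig_carrier: "Sig d L \<sigma> l \<in> carrier_mat (d l) (d (l - 1))"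
  by (simp add: Sig_def)

lemma Sig_index: "i < d l \<Longrightarrow> j < d (l - 1) \<Longrightarrow>
  Sig d L \<sigma> l $$ (i,j) = (if i = j \<and> i < dmin d L then \<sigma> $ i else 0)"
  by (simp add: Sig_def)

lemma Sig_left: assumes "X \<in> carrier_mat (d (l - 1)) c" "i < d l" "j < c" "dmin d L \<le> d (l - 1)"
  shows "(Sig d L \<sigma> l * X) $$ (i,j) = (if i < dmin d L then \<sigma> $ i * X $$ (i,j) else 0)"
proof -
  have "(Sig d L \<sigma> l * X) $$ (i,j) = (\<Sum>k<d (l - 1). Sig d L \<sigma> l $$ (i,k) * X $$ (k,j))"
    using mult_entry[OF Sig_carrier assms(1) assms(2,3)] .
  also have "\<dots> = (\<Sum>k<d (l - 1). if k = i then (if i < dmin d L then \<sigma> $ i * X $$ (i,j) else 0) else 0)"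
    using assms by (intro sum.cong) (auto simp: Sig_index)
  also have "\<dots> = (if i < dmin d L then \<sigma> $ i * X $$ (i,j) else 0)"
    using assms(4) by (simp add: sum_single)
  finally show ?thesis .
qed

lemma Sig_right: assumes "X \<in> carrier_mat a (d l)" "i < a" "j < d (l - 1)" "dmin d L \<le> d l"
  shows "(X * Sig d L \<sigma> l) $$ (i,j) = (if j < dmin d L then X $$ (i,j) * \<sigma> $ j else 0)"
proof -
  have "(X * Sig d L \<sigma> l) $$ (i,j) = (\<Sum>k<d l. X $$ (i,k) * Sig d L \<sigma> l $$ (k,j))"
    using mult_entry[OF assms(1) Sig_carrier assms(2,3)] .
  also have "\<dots> = (\<Sum>k<d l. if k = j then (if j < dmin d L then X $$ (i,j) * \<sigma> $ j else 0) else 0)"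
    using assms by (intro sum.cong) (auto simp: Sig_index)
  also have "\<dots> = (if j < dmin d L then X $$ (i,j) * \<sigma> $ j else 0)"
    using assms(4) by (simp add: sum_single)
  finally show ?thesis .
qed


lemma blk_char: "k < length ns \<Longrightarrow> sum_list (take k ns) \<le> i \<Longrightarrow> i < sum_list (take (Suc k) ns) \<Longrightarrow> blk ns i = k"
proof (induction ns arbitrary: i k)
  case Nil then show ?case by simp
next
  case (Cons n ns i k)
  show ?case
  proof (cases k)
    case 0 then show ?thesis using Cons.prems by simp
  next
    case (Suc k')
    then have "n \<le> i" using Cons.prems by simp
    moreover have "blk ns (i - n) = k'" using Cons.prems Suc by (intro Cons.IH) auto
    ultimately show ?thesis using Suc by simp
  qed
qed

lemma blk_append: "i < sum_list ns \<Longrightarrow> blk (ns @ ms) i = blk ns i"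
  by (induction ns arbitrary: i) auto

lemma blk_append2: "sum_list ns \<le> i \<Longrightarrow> i < sum_list ns + c \<Longrightarrow> blk (ns @ [c]) i = length ns"
  by (induction ns arbitrary: i) auto

lemma telescope: "(\<forall>k. k < q \<longrightarrow> f k \<le> f (Suc k)) \<Longrightarrow>
   sum_list (map (\<lambda>k. f k - f (k - 1)) [1..<Suc q]) = f q - (f 0 :: nat)"
proof (induction q)
  case 0 then show ?case by simp
next
  case (Suc q)
  have mono: "f 0 \<le> f q"
    using Suc.prems by (induction q) (auto intro: order_trans)
  have "sum_list (map (\<lambda>k. f k - f (k - 1)) [1..<Suc (Suc q)])
        = sum_list (map (\<lambda>k. f k - f (k - 1)) [1..<Suc q]) + (f (Suc q) - f q)" by simp
  also have "\<dots> = f q - f 0 + (f (Suc q) - f q)" using Suc by simp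
  also have "\<dots> = f (Suc q) - f 0" using mono Suc.prems by simp
  finally show ?case .
qed

context
  fixes m :: nat and y :: "nat \<Rightarrow> real"
  assumes ys: "\<forall>i j. i \<le> j \<longrightarrow> j < m \<longrightarrow> y j \<le> y i"
    and ynn: "\<forall>i<m. y i \<ge> 0"
begin

lemma pos_init: "rY m y \<le> m \<and> (\<forall>i<m. 0 < y i \<longleftrightarrow> i < rY m y)"
proof (cases "{i. i < m \<and> y i > 0} = {}")
  case True
  have "rY m y = 0" unfolding rY_def True by simp
  moreover have "\<forall>i<m. \<not> 0 < y i" using True by blast
  ultimately show ?thesis by simp
next
  case False
  let ?S = "{i. i < m \<and> y i > 0}"
  have fin: "finite ?S" by simp
  define M where "M = Max ?S"
  have M: "M \<in> ?S" using Max_in[OF fin False] M_def by simp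
  have "?S = {..M}"
  proof
    show "?S \<subseteq> {..M}" using Max_ge[OF fin] M_def by auto
    show "{..M} \<subseteq> ?S"
    proof
      fix i assume "i \<in> {..M}"
      then have "i \<le> M" by simp
      moreover have "M < m" "y M > 0" using M by auto
      ultimately have "i < m" "y i \<ge> y M" using ys by auto
      then show "i \<in> ?S" using \<open>y M > 0\<close> by auto
    qed
  qed
  have "card ?S = Suc M" unfolding \<open>?S = {..M}\<close> by simp
  then have rYM: "rY m y = Suc M" unfolding rY_def .
  have Mm: "M < m" using M by simp
  have "\<forall>i<m. 0 < y i \<longleftrightarrow> i < Suc M"
  proof (intro allI impI)
    fix i assume "i < m"
    have "(i \<in> ?S) = (i \<in> {..M})" using \<open>?S = {..M}\<close> by (rule arg_cong)
    then have "(0 < y i) = (i \<le> M)" using \<open>i < m\<close> by simp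
    then show "0 < y i \<longleftrightarrow> i < Suc M" by (simp add: less_Suc_eq_le)
  qed
  then show ?thesis using rYM Mm by simp
qed

abbreviation "r \<equiv> rY m y"
abbreviation "p \<equiv> pY m y"
definition "J = {j. 1 \<le> j \<and> j \<le> r \<and> yext m y (j - 1) > yext m y j}"

lemma r_le: "r \<le> m" using pos_init by simp
lemma pos_iff: "i < m \<Longrightarrow> 0 < y i \<longleftrightarrow> i < r" using pos_init by simp

lemma y_zero: assumes "r \<le> i" "i < m" shows "y i = 0"
proof -
  have "\<not> 0 < y i" using pos_iff[OF assms(2)] assms(1) by simp
  moreover have "0 \<le> y i" using ynn assms(2) by simp
  ultimately show ?thesis by simp
qed

lemma yext_r: "yext m y r = 0"
  using y_zero[of r] by (auto simp: yext_def)

lemma J_fin: "finite J" unfolding J_def by (rule finite_subset[of _ "{..r}"]) auto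

lemma J_sub: "j \<in> J \<Longrightarrow> 1 \<le> j \<and> j \<le> r" unfolding J_def by auto

lemma r_in_J: "0 < r \<Longrightarrow> r \<in> J"
proof -
  assume r: "0 < r"
  have "r - 1 < m" using r r_le by simp
  then have "yext m y (r - 1) = y (r - 1)" by (simp add: yext_def)
  moreover have "y (r - 1) > 0" using pos_iff[of "r - 1"] r r_le by simp
  ultimately show "r \<in> J" using r yext_r unfolding J_def by simp
qed

lemma card_J: "card J = p"
proof -
  let ?V = "{y i | i. i < m \<and> y i > 0}"
  have yx: "j \<in> J \<Longrightarrow> yext m y (j - 1) = y (j - 1) \<and> j - 1 < r" for j
    using J_sub[of j] r_le by (auto simp: yext_def)
  have inj: "inj_on (\<lambda>j. y (j - 1)) J"
  proof (rule inj_onI)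
    fix j1 j2 assume j: "j1 \<in> J" "j2 \<in> J" "y (j1 - 1) = y (j2 - 1)"
    show "j1 = j2"
    proof (rule ccontr)
      assume "j1 \<noteq> j2"
      then consider "j1 < j2" | "j2 < j1" by linarith
      then show False
      proof cases
        case 1
        have "yext m y j1 = y j1" using 1 J_sub[OF j(2)] r_le by (simp add: yext_def)
        moreover have "y (j1 - 1) > yext m y j1" using j(1) yx[OF j(1)] unfolding J_def by simp
        moreover have "y j1 \<ge> y (j2 - 1)" using ys 1 J_sub[OF j(2)] r_le by auto
        ultimately show False using j(3) by simp
      next
        case 2
        have "yext m y j2 = y j2" using 2 J_sub[OF j(1)] r_le by (simp add: yext_def)
        moreover have "y (j2 - 1) > yext m y j2" using j(2) yx[OF j(2)] unfolding J_def by simp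
        moreover have "y j2 \<ge> y (j1 - 1)" using ys 2 J_sub[OF j(1)] r_le by auto
        ultimately show False using j(3) by simp
      qed
    qed
  qed
  have img: "(\<lambda>j. y (j - 1)) ` J = ?V"
  proof
    show "(\<lambda>j. y (j - 1)) ` J \<subseteq> ?V"
    proof
      fix v assume "v \<in> (\<lambda>j. y (j - 1)) ` J"
      then obtain j where j: "j \<in> J" "v = y (j - 1)" by auto
      have "j - 1 < r" using yx[OF j(1)] by simp
      then show "v \<in> ?V" using j pos_iff[of "j - 1"] r_le by auto
    qed
    show "?V \<subseteq> (\<lambda>j. y (j - 1)) ` J"
    proof
      fix v assume "v \<in> ?V"
      then obtain i where i: "i < m" "y i > 0" "v = y i" by auto
      have ir: "i < r" using pos_iff[OF i(1)] i(2) by simp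
      let ?T = "{t. t < r \<and> y t = v}"
      have finT: "finite ?T" by simp
      have neT: "?T \<noteq> {}" using ir i by auto
      define t where "t = Max ?T"
      have t: "t < r" "y t = v" using Max_in[OF finT neT] t_def by auto
      have tmax: "t' < r \<Longrightarrow> y t' = v \<Longrightarrow> t' \<le> t" for t' using Max_ge[OF finT] t_def by auto
      have "yext m y (Suc t) < v"
      proof (cases "Suc t < r")
        case True
        have "y (Suc t) \<le> y t" using ys True r_le by auto
        moreover have "y (Suc t) \<noteq> v" using tmax[OF True] by auto
        ultimately show ?thesis using True r_le t by (auto simp: yext_def)
      next
        case False
        then have "Suc t = r" using t by simp
        then show ?thesis using yext_r i t by simp
      qed
      moreover have "yext m y t = v" using t r_le by (simp add: yext_def)
      ultimately have "Suc t \<in> J" using t unfolding J_def by simp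
      then show "v \<in> (\<lambda>j. y (j - 1)) ` J" using t by force
    qed
  qed
  show ?thesis unfolding pY_def using card_image[OF inj] img by simp
qed

definition "xs = sorted_list_of_set J"

lemma xs_len: "length xs = p" using card_J J_fin by (simp add: xs_def)
lemma xs_sorted: "sorted_wrt (<) xs" by (simp add: xs_def)
lemma xs_set: "set xs = J" using J_fin by (simp add: xs_def)

lemma sY_eq: "sY m y k = (0 # xs) ! k" unfolding sY_def xs_def J_def by simp

lemma sY0: "sY m y 0 = 0" by (simp add: sY_eq)

lemma sY_Suc: "k < p \<Longrightarrow> sY m y (Suc k) = xs ! k" by (simp add: sY_eq)

lemma sY_mono: "k \<le> k' \<Longrightarrow> k' \<le> p \<Longrightarrow> sY m y k \<le> sY m y k'"
proof (cases k)
  case 0 then show ?thesis by (simp add: sY0)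
next
  case (Suc k0)
  assume a: "k \<le> k'" "k' \<le> p"
  then obtain k0' where k0': "k' = Suc k0'" using Suc by (cases k') auto
  have "xs ! k0 \<le> xs ! k0'"
    using xs_sorted a Suc k0' xs_len sorted_wrt_nth_less[OF xs_sorted, of k0 k0']
    by (cases "k0 = k0'") auto
  then show ?thesis using Suc k0' a by (simp add: sY_eq)
qed

lemma sY_p: "sY m y p = r"
proof (cases "p = 0")
  case True
  then have "J = {}" using card_J J_fin by simp
  then have "r = 0" using r_in_J by auto
  then show ?thesis using True by (simp add: sY0)
next
  case False
  have "xs ! (p - 1) \<in> J" using xs_set xs_len False by (metis diff_less less_numeral_extra(1) neq0_conv nth_mem)
  then have le: "xs ! (p - 1) \<le> r" using J_sub by auto
  have "0 < r" using le J_sub[OF \<open>xs ! (p - 1) \<in> J\<close>] by simp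
  then have "r \<in> set xs" using r_in_J xs_set by simp
  then obtain t where t: "t < p" "xs ! t = r" using xs_len by (metis in_set_conv_nth)
  have "xs ! t \<le> xs ! (p - 1)"
  proof (cases "t = p - 1")
    case True then show ?thesis by simp
  next
    case False
    then have "t < p - 1" using t by simp
    then show ?thesis using sorted_wrt_nth_less[OF xs_sorted, of t "p - 1"] xs_len False by simp
  qed
  then have "xs ! (p - 1) = r" using le t by simp
  then show ?thesis using False sY_Suc[of "p - 1"] by simp
qed

lemma sY_in_J: "k < p \<Longrightarrow> sY m y (Suc k) \<in> J"
  using sY_Suc xs_set xs_len by (metis nth_mem)

definition "ns = map (hY m y) [1..<Suc p]"

lemma ns_len: "length ns = p" by (simp add: ns_def)

lemma sum_take_ns: "k \<le> p \<Longrightarrow> sum_list (take k ns) = sY m y k"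
proof -
  assume k: "k \<le> p"
  have "take k ns = map (\<lambda>k. sY m y k - sY m y (k - 1)) [1..<Suc k]"
  proof -
    have tu: "take k [1..<Suc p] = [1..<Suc k]" using take_upt[of 1 k "Suc p"] k by (simp del: upt_Suc)
    show ?thesis unfolding ns_def hY_def take_map tu by simp
  qed
  also have "sum_list \<dots> = sY m y k - sY m y 0"
    using k sY_mono by (intro telescope) auto
  finally show ?thesis by (simp add: sY0)
qed

lemma sum_ns: "sum_list ns = r"
  using sum_take_ns[of p] ns_len sY_p by simp

lemma blk_ns: "k < p \<Longrightarrow> sY m y k \<le> i \<Longrightarrow> i < sY m y (Suc k) \<Longrightarrow> blk ns i = k"
  using blk_char[of k ns i] sum_take_ns[of k] sum_take_ns[of "Suc k"] ns_len by simp

lemma blk_exists: "i < r \<Longrightarrow> \<exists>k<p. sY m y k \<le> i \<and> i < sY m y (Suc k)"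
proof -
  assume i: "i < r"
  let ?K = "{k. k \<le> p \<and> sY m y k \<le> i}"
  have fin: "finite ?K" by simp
  have ne: "0 \<in> ?K" by (simp add: sY0)
  define k where "k = Max ?K"
  have "k \<in> ?K" using Max_in[OF fin] ne k_def by blast
  then have k: "k \<le> p" "sY m y k \<le> i" by auto
  have "k \<noteq> p" using k sY_p i by auto
  then have kp: "k < p" using k by simp
  have "sY m y (Suc k) > i"
  proof (rule ccontr)
    assume "\<not> ?thesis"
    then have "Suc k \<in> ?K" using kp by simp
    then have "Suc k \<le> k" using Max_ge[OF fin, of "Suc k"] k_def by simp
    then show False by simp
  qed
  then show ?thesis using kp k by blast
qed

lemma blk_same: assumes "i < r" "j < r" "y i = y j" shows "blk ns i = blk ns j"
proof -
  have main: "blk ns a = blk ns b" if ab: "a < b" "b < r" "y a = y b" for a b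
  proof -
    have ar: "a < r" using ab by simp
    obtain k where k: "k < p" "sY m y k \<le> a" "a < sY m y (Suc k)" using blk_exists[OF ar] by blast
    obtain k' where k': "k' < p" "sY m y k' \<le> b" "b < sY m y (Suc k')" using blk_exists[OF ab(2)] by blast
    have "k = k'"
    proof (rule ccontr)
      assume "k \<noteq> k'"
      then consider "k < k'" | "k' < k" by linarith
      then show False
      proof cases
        case 1
        define t where "t = sY m y (Suc k)"
        have tJ: "t \<in> J" using sY_in_J k(1) t_def by simp
        have "t \<le> sY m y k'" using sY_mono[of "Suc k" k'] 1 k' t_def by simp
        then have tb: "t \<le> b" using k' by simp
        have at: "a \<le> t - 1" using k t_def by simp
        have tr: "t \<le> r" using J_sub[OF tJ] by simp
        have "yext m y (t - 1) > yext m y t" using tJ unfolding J_def by simp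
        moreover have "yext m y (t - 1) = y (t - 1)" "yext m y t = y t"
          using tb ab r_le J_sub[OF tJ] by (auto simp: yext_def)
        moreover have tm: "t - 1 < m" using tb ab r_le by linarith
        moreover have "y a \<ge> y (t - 1)" using ys at tm by blast
        moreover have "y t \<ge> y b" using ys[rule_format, of t b] tb ab r_le by linarith
        ultimately show False using ab(3) by simp
      next
        case 2
        have "sY m y (Suc k') \<le> sY m y k" using sY_mono[of "Suc k'" k] 2 k by simp
        then show False using k k' ab by simp
      qed
    qed
    then show ?thesis using blk_ns k k' by simp
  qed
  show ?thesis
  proof (cases "i = j")
    case True then show ?thesis by simp
  next
    case False
    then consider "i < j" | "j < i" by linarith
    then show ?thesis using main assms by cases auto
  qed
qed

end


lemma split_sum: "Suc t \<le> m \<Longrightarrow> (\<Sum>k<m. f k) = (\<Sum>k<Suc t. f k) + (\<Sum>k\<in>{Suc t..<m}. (f k :: real))"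
proof -
  assume a: "Suc t \<le> m"
  have e: "{..<m} = {..<Suc t} \<union> {Suc t..<m}" using a by auto
  have "(\<Sum>k<m. f k) = (\<Sum>k\<in>{..<Suc t} \<union> {Suc t..<m}. f k)" by (simp only: e)
  also have "\<dots> = (\<Sum>k<Suc t. f k) + (\<Sum>k\<in>{Suc t..<m}. f k)" by (rule sum.union_disjoint) auto
  finally show ?thesis .
qed

lemma knapsack:
  fixes z w :: "nat \<Rightarrow> real"
  assumes zd: "\<forall>i j. i \<le> j \<longrightarrow> j < m \<longrightarrow> z j \<le> z i" and zn: "\<forall>i<m. 0 \<le> z i"
    and t: "t < m" and w: "\<forall>k<m. 0 \<le> w k \<and> w k \<le> 1" and ws: "(\<Sum>k<m. w k) \<le> Suc t"
  shows "(\<Sum>k<m. z k * w k) \<le> (\<Sum>k<Suc t. z k)"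
proof -
  have st: "Suc t \<le> m" using t by simp
  have A: "(\<Sum>k<Suc t. z k) - (\<Sum>k<Suc t. z k * w k) \<ge> z t * (Suc t - (\<Sum>k<Suc t. w k))"
  proof -
    have "(\<Sum>k<Suc t. z k) - (\<Sum>k<Suc t. z k * w k) = (\<Sum>k<Suc t. z k * (1 - w k))"
      by (simp add: sum_subtractf algebra_simps)
    also have "\<dots> \<ge> (\<Sum>k<Suc t. z t * (1 - w k))"
    proof (rule sum_mono)
      fix k assume "k \<in> {..<Suc t}"
      then have "k \<le> t" by simp
      then have "z t \<le> z k" using zd t by auto
      moreover have "0 \<le> 1 - w k" using w t \<open>k \<le> t\<close> by auto
      ultimately show "z t * (1 - w k) \<le> z k * (1 - w k)" by (rule mult_right_mono)
    qed
    moreover have "(\<Sum>k<Suc t. z t * (1 - w k)) = z t * (Suc t - (\<Sum>k<Suc t. w k))"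
      by (simp add: sum_distrib_left[symmetric] sum_subtractf)
    ultimately show ?thesis by simp
  qed
  have B: "(\<Sum>k\<in>{Suc t..<m}. z k * w k) \<le> z t * (\<Sum>k\<in>{Suc t..<m}. w k)"
  proof -
    have "(\<Sum>k\<in>{Suc t..<m}. z k * w k) \<le> (\<Sum>k\<in>{Suc t..<m}. z t * w k)"
    proof (rule sum_mono)
      fix k assume "k \<in> {Suc t..<m}"
      then have "t \<le> k" "k < m" by auto
      then have "z k \<le> z t" using zd by auto
      moreover have "0 \<le> w k" using w \<open>k < m\<close> by auto
      ultimately show "z k * w k \<le> z t * w k" by (rule mult_right_mono)
    qed
    then show ?thesis by (simp add: sum_distrib_left)
  qed
  have C: "(\<Sum>k<m. w k) = (\<Sum>k<Suc t. w k) + (\<Sum>k\<in>{Suc t..<m}. w k)" using split_sum[OF st] .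
  have D: "(\<Sum>k<m. z k * w k) = (\<Sum>k<Suc t. z k * w k) + (\<Sum>k\<in>{Suc t..<m}. z k * w k)"
    using split_sum[OF st] .
  have zt: "0 \<le> z t" using zn t by auto
  have "z t * (Suc t - (\<Sum>k<m. w k)) \<ge> 0" using zt ws by simp
  then show ?thesis using A B C D by (simp add: algebra_simps)
qed

lemma abel:
  fixes x e :: "nat \<Rightarrow> real"
  shows "(\<forall>i j. i \<le> j \<longrightarrow> j < m \<longrightarrow> x j \<le> x i) \<Longrightarrow> (\<forall>i<m. 0 \<le> x i) \<Longrightarrow>
    (\<forall>t<m. 0 \<le> (\<Sum>i<Suc t. e i)) \<Longrightarrow> 0 \<le> (\<Sum>i<m. x i * e i)"
proof (induction m arbitrary: x)
  case 0 then show ?case by simp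
next
  case (Suc n x)
  define x' where "x' i = x i - x n" for i
  have "(\<Sum>i<n. x' i * e i) \<ge> 0"
  proof (rule Suc.IH)
    show "\<forall>i j. i \<le> j \<longrightarrow> j < n \<longrightarrow> x' j \<le> x' i" using Suc.prems(1) by (auto simp: x'_def)
    show "\<forall>i<n. 0 \<le> x' i" using Suc.prems(1) by (auto simp: x'_def)
    show "\<forall>t<n. 0 \<le> (\<Sum>i<Suc t. e i)" using Suc.prems(3) by auto
  qed
  moreover have "x n * (\<Sum>i<Suc n. e i) \<ge> 0" using Suc.prems(2,3) by simp
  moreover have "(\<Sum>i<Suc n. x i * e i) = (\<Sum>i<n. x' i * e i) + x n * (\<Sum>i<Suc n. e i)"
    by (simp add: x'_def algebra_simps sum_distrib_left sum_subtractf)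
  ultimately show ?case by simp
qed

lemma rearr:
  fixes x z :: "nat \<Rightarrow> real" and M :: "nat \<Rightarrow> nat \<Rightarrow> real"
  assumes xd: "\<forall>i j. i \<le> j \<longrightarrow> j < m \<longrightarrow> x j \<le> x i" and xn: "\<forall>i<m. 0 \<le> x i"
    and zd: "\<forall>i j. i \<le> j \<longrightarrow> j < m \<longrightarrow> z j \<le> z i" and zn: "\<forall>i<m. 0 \<le> z i"
    and Mn: "\<forall>i k. 0 \<le> M i k"
    and rows: "\<forall>i<m. (\<Sum>k<m. M i k) \<le> 1" and cols: "\<forall>k<m. (\<Sum>i<m. M i k) \<le> 1"
  shows "(\<Sum>i<m. \<Sum>k<m. x i * z k * M i k) \<le> (\<Sum>i<m. x i * z i)"
proof -
  define c where "c i = (\<Sum>k<m. z k * M i k)" for i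
  have pref: "\<forall>t<m. 0 \<le> (\<Sum>i<Suc t. z i - c i)"
  proof (intro allI impI)
    fix t assume t: "t < m"
    define w where "w k = (\<Sum>i<Suc t. M i k)" for k
    have "(\<Sum>i<Suc t. c i) = (\<Sum>k<m. z k * w k)"
      unfolding c_def w_def by (simp only: sum_distrib_left) (rule sum.swap)
    also have "\<dots> \<le> (\<Sum>k<Suc t. z k)"
    proof (rule knapsack[OF zd zn t])
      show "\<forall>k<m. 0 \<le> w k \<and> w k \<le> 1"
      proof (intro allI impI conjI)
        fix k assume k: "k < m"
        show "0 \<le> w k" unfolding w_def using Mn by (simp add: sum_nonneg)
        have "w k \<le> (\<Sum>i<m. M i k)" unfolding w_def
          using t Mn by (intro sum_mono2) auto
        then show "w k \<le> 1" using cols k by force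
      qed
      have "(\<Sum>k<m. w k) = (\<Sum>i<Suc t. \<Sum>k<m. M i k)" unfolding w_def by (rule sum.swap)
      also have "\<dots> \<le> (\<Sum>i<Suc t. 1)" using rows t by (intro sum_mono) auto
      finally show "(\<Sum>k<m. w k) \<le> Suc t" by simp
    qed
    finally show "0 \<le> (\<Sum>i<Suc t. z i - c i)" by (simp add: sum_subtractf)
  qed
  have "0 \<le> (\<Sum>i<m. x i * (z i - c i))" using abel[OF xd xn pref] .
  moreover have "(\<Sum>i<m. \<Sum>k<m. x i * z k * M i k) = (\<Sum>i<m. x i * c i)"
    unfolding c_def by (simp add: sum_distrib_left algebra_simps)
  ultimately show ?thesis by (simp add: algebra_simps sum_subtractf)
qed


lemma frob_gram: assumes "B \<in> carrier_mat a c"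
  shows "frob_sq B = (\<Sum>j<c. (transpose_mat B * B) $$ (j,j))"
proof -
  have "(\<Sum>j<c. (transpose_mat B * B) $$ (j,j)) = (\<Sum>j<c. \<Sum>i<a. (B $$ (i,j))^2)"
  proof (rule sum.cong)
    fix j assume "j \<in> {..<c}"
    then show "(transpose_mat B * B) $$ (j,j) = (\<Sum>i<a. (B $$ (i,j))^2)"
      using mult_entry[of "transpose_mat B" c a B c j j] assms by (simp add: power2_eq_square)
  qed simp
  also have "\<dots> = (\<Sum>i<a. \<Sum>j<c. (B $$ (i,j))^2)" by (rule sum.swap)
  finally show ?thesis using assms unfolding frob_sq_def by simp
qed

lemma frob_left: assumes "orth_mat n Q" "A \<in> carrier_mat n c"
  shows "frob_sq (Q * A) = frob_sq A"
proof -
  have Q: "Q \<in> carrier_mat n n" using assms(1) by (rule orth_carrier)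
  have Qt: "transpose_mat Q \<in> carrier_mat n n" using Q by simp
  have At: "transpose_mat A \<in> carrier_mat c n" using assms(2) by simp
  have QA: "Q * A \<in> carrier_mat n c" using Q assms(2) by simp
  have "transpose_mat (Q * A) * (Q * A) = (transpose_mat A * transpose_mat Q) * (Q * A)"
    using transpose_mult[OF Q assms(2)] by simp
  also have "\<dots> = transpose_mat A * (transpose_mat Q * (Q * A))"
    using assoc_mult_mat[OF At Qt QA] .
  also have "transpose_mat Q * (Q * A) = (transpose_mat Q * Q) * A"
    using assoc_mult_mat[OF Qt Q assms(2)] by simp
  also have "\<dots> = A" using assms by (simp add: orth_mat_def)
  finally have e: "transpose_mat (Q * A) * (Q * A) = transpose_mat A * A" .
  show ?thesis using frob_gram[OF QA] frob_gram[OF assms(2)] e by simp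
qed

lemma frob_transpose: "frob_sq (transpose_mat A) = frob_sq A"
proof -
  have "frob_sq (transpose_mat A) = (\<Sum>i<dim_col A. \<Sum>j<dim_row A. (A $$ (j,i))^2)"
    unfolding frob_sq_def by (intro sum.cong) auto
  also have "\<dots> = frob_sq A" unfolding frob_sq_def by (rule sum.swap)
  finally show ?thesis .
qed

lemma frob_right: assumes "orth_mat n R" "A \<in> carrier_mat a n"
  shows "frob_sq (A * R) = frob_sq A"
proof -
  have R: "R \<in> carrier_mat n n" using assms(1) by (rule orth_carrier)
  have "frob_sq (A * R) = frob_sq (transpose_mat (A * R))" by (simp add: frob_transpose)
  also have "\<dots> = frob_sq (transpose_mat R * transpose_mat A)" using transpose_mult[OF assms(2) R] by simp
  also have "\<dots> = frob_sq (transpose_mat A)"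
    using frob_left[OF orth_transpose[OF assms(1)], of "transpose_mat A" a] assms(2) by simp
  finally show ?thesis by (simp add: frob_transpose)
qed

lemma frob_diff: assumes "A \<in> carrier_mat a c" "B \<in> carrier_mat a c"
  shows "frob_sq (A - B) = frob_sq A + frob_sq B - 2 * (\<Sum>i<a. \<Sum>j<c. A $$ (i,j) * B $$ (i,j))"
proof -
  have "frob_sq (A - B) = (\<Sum>i<a. \<Sum>j<c. (A $$ (i,j))^2 + (B $$ (i,j))^2 - 2 * (A $$ (i,j) * B $$ (i,j)))"
    unfolding frob_sq_def using assms by (intro sum.cong) (auto simp: power2_eq_square algebra_simps)
  also have "\<dots> = frob_sq A + frob_sq B - 2 * (\<Sum>i<a. \<Sum>j<c. A $$ (i,j) * B $$ (i,j))"
    unfolding frob_sq_def using assms by (simp add: sum.distrib sum_subtractf sum_distrib_left)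
  finally show ?thesis .
qed

lemma sum_restrict: "m \<le> (n::nat) \<Longrightarrow> (\<Sum>i<n. if i < m then f i else 0) = (\<Sum>i<m. (f i :: real))"
proof -
  assume mn: "m \<le> n"
  have "(\<Sum>i<n. if i < m then f i else 0) = (\<Sum>i\<in>{..<n}. if i \<in> {..<m} then f i else 0)"
    by simp
  also have "\<dots> = (\<Sum>i\<in>{..<n} \<inter> {..<m}. f i)"
    using sum.inter_restrict[OF finite_lessThan[of n], of f "{..<m}"] by simp
  also have "{..<n} \<inter> {..<m} = {..<m}" using mn by auto
  finally show ?thesis by simp
qed

lemma orth_cancel_left: "orth_mat n U \<Longrightarrow> A \<in> carrier_mat n c \<Longrightarrow> transpose_mat U * (U * A) = A"
proof -
  assume o: "orth_mat n U" and A: "A \<in> carrier_mat n c"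
  have U: "U \<in> carrier_mat n n" using o by (rule orth_carrier)
  have "transpose_mat U * (U * A) = (transpose_mat U * U) * A"
    using assoc_mult_mat[of "transpose_mat U" n n U n A c] U A by simp
  then show ?thesis using o A by (simp add: orth_mat_def)
qed

lemma orth_cancel_right: "orth_mat n V \<Longrightarrow> A \<in> carrier_mat a n \<Longrightarrow> (A * V) * transpose_mat V = A"
proof -
  assume o: "orth_mat n V" and A: "A \<in> carrier_mat a n"
  have V: "V \<in> carrier_mat n n" using o by (rule orth_carrier)
  have "(A * V) * transpose_mat V = A * (V * transpose_mat V)"
    using assoc_mult_mat[of A a n V n "transpose_mat V" n] V A by simp
  then show ?thesis using orth_right[OF o] A by simp
qed

context
  fixes d :: "nat \<Rightarrow> nat" and L :: nat
begin

abbreviation "mm \<equiv> dmin d L"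

lemma frob_Sig1: assumes "mm \<le> d 0" "mm \<le> d 1"
  shows "frob_sq (Sig d L \<sigma> 1) = (\<Sum>i<mm. (\<sigma> $ i)^2)"
proof -
  have "frob_sq (Sig d L \<sigma> 1) = (\<Sum>i<d 1. \<Sum>j<d 0. (if j = i then (if i < mm then (\<sigma> $ i)^2 else 0) else 0))"
    unfolding frob_sq_def by (intro sum.cong) (auto simp: Sig_def)
  also have "\<dots> = (\<Sum>i<d 1. if i < mm then (\<sigma> $ i)^2 else 0)"
    using assms by (intro sum.cong) (auto simp: sum_single)
  also have "\<dots> = (\<Sum>i<mm. (\<sigma> $ i)^2)" using assms by (simp add: sum_restrict)
  finally show ?thesis .
qed

lemma cross_Sig1: assumes "mm \<le> d 0" "mm \<le> d 1" "M \<in> carrier_mat (d 1) (d 0)"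
  shows "(\<Sum>i<d 1. \<Sum>j<d 0. Sig d L \<sigma> 1 $$ (i,j) * M $$ (i,j)) = (\<Sum>i<mm. \<sigma> $ i * M $$ (i,i))"
proof -
  have "(\<Sum>i<d 1. \<Sum>j<d 0. Sig d L \<sigma> 1 $$ (i,j) * M $$ (i,j))
     = (\<Sum>i<d 1. \<Sum>j<d 0. (if j = i then (if i < mm then \<sigma> $ i * M $$ (i,i) else 0) else 0))"
    by (intro sum.cong) (auto simp: Sig_def)
  also have "\<dots> = (\<Sum>i<d 1. if i < mm then \<sigma> $ i * M $$ (i,i) else 0)"
    using assms by (intro sum.cong) (auto simp: sum_single)
  also have "\<dots> = (\<Sum>i<mm. \<sigma> $ i * M $$ (i,i))" using assms by (simp add: sum_restrict)
  finally show ?thesis .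
qed

lemma svd_bound:
  assumes m0: "mm \<le> d 0" and m1: "mm \<le> d 1"
    and U: "orth_mat (d 1) U" and U': "orth_mat (d 1) U'"
    and V: "orth_mat (d 0) V" and V': "orth_mat (d 0) V'"
    and sd: "\<forall>i j. i \<le> j \<longrightarrow> j < mm \<longrightarrow> \<sigma> $ j \<le> \<sigma> $ i" and sn: "\<forall>i<mm. 0 \<le> \<sigma> $ i"
    and sd': "\<forall>i j. i \<le> j \<longrightarrow> j < mm \<longrightarrow> \<sigma>' $ j \<le> \<sigma>' $ i" and sn': "\<forall>i<mm. 0 \<le> \<sigma>' $ i"
  shows "frob_sq (U * Sig d L \<sigma> 1 * V - U' * Sig d L \<sigma>' 1 * V') \<ge> (\<Sum>i<mm. (\<sigma> $ i - \<sigma>' $ i)^2)"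
proof -
  let ?S = "Sig d L \<sigma> 1" and ?S' = "Sig d L \<sigma>' 1"
  have S: "?S \<in> carrier_mat (d 1) (d 0)" and S': "?S' \<in> carrier_mat (d 1) (d 0)"
    using Sig_carrier[of d L _ 1] by auto
  have Uc: "U \<in> carrier_mat (d 1) (d 1)" and U'c: "U' \<in> carrier_mat (d 1) (d 1)"
    and Vc: "V \<in> carrier_mat (d 0) (d 0)" and V'c: "V' \<in> carrier_mat (d 0) (d 0)"
    using U U' V V' orth_carrier by auto
  have Ut: "transpose_mat U \<in> carrier_mat (d 1) (d 1)" and Vt: "transpose_mat V \<in> carrier_mat (d 0) (d 0)"
    using Uc Vc by auto
  define P where "P = transpose_mat U * U'"
  define R where "R = V' * transpose_mat V"
  have P: "orth_mat (d 1) P" unfolding P_def by (rule orth_mult[OF orth_transpose[OF U] U'])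
  have R: "orth_mat (d 0) R" unfolding R_def by (rule orth_mult[OF V' orth_transpose[OF V]])
  have Pc: "P \<in> carrier_mat (d 1) (d 1)" and Rc: "R \<in> carrier_mat (d 0) (d 0)"
    using P R orth_carrier by auto
  let ?X = "U * ?S * V" and ?X' = "U' * ?S' * V'"
  have US: "U * ?S \<in> carrier_mat (d 1) (d 0)" and US': "U' * ?S' \<in> carrier_mat (d 1) (d 0)"
    using Uc U'c S S' by auto
  have X: "?X \<in> carrier_mat (d 1) (d 0)" and X': "?X' \<in> carrier_mat (d 1) (d 0)"
    using US US' Vc V'c by auto
  have D: "?X - ?X' \<in> carrier_mat (d 1) (d 0)" using minus_carrier_mat[OF X'] .
  define M where "M = (P * ?S') * R"
  have PS: "P * ?S' \<in> carrier_mat (d 1) (d 0)" using Pc S' by simp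
  have Mc: "M \<in> carrier_mat (d 1) (d 0)" unfolding M_def using PS Rc by simp
  have e1: "transpose_mat U * ?X = ?S * V"
  proof -
    have "transpose_mat U * ?X = (transpose_mat U * (U * ?S)) * V"
      using assoc_mult_mat[OF Ut US Vc] by simp
    also have "\<dots> = ?S * V" using orth_cancel_left[OF U S] by simp
    finally show ?thesis .
  qed
  have e2: "transpose_mat U * ?X' = (P * ?S') * V'"
  proof -
    have "transpose_mat U * ?X' = (transpose_mat U * (U' * ?S')) * V'"
      using assoc_mult_mat[OF Ut US' V'c] by simp
    also have "transpose_mat U * (U' * ?S') = P * ?S'"
      unfolding P_def using assoc_mult_mat[OF Ut U'c S'] by simp
    finally show ?thesis .
  qed
  have e3: "(?S * V) * transpose_mat V = ?S" using orth_cancel_right[OF V S] .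
  have e4: "((P * ?S') * V') * transpose_mat V = M"
    unfolding M_def R_def using assoc_mult_mat[OF PS V'c Vt] by simp
  have key: "(transpose_mat U * (?X - ?X')) * transpose_mat V = ?S - M"
  proof -
    have "transpose_mat U * (?X - ?X') = transpose_mat U * ?X - transpose_mat U * ?X'"
      using mult_minus_distrib_mat[OF Ut X X'] .
    also have "\<dots> = ?S * V - (P * ?S') * V'" using e1 e2 by simp
    finally have "(transpose_mat U * (?X - ?X')) * transpose_mat V = (?S * V - (P * ?S') * V') * transpose_mat V"
      by simp
    also have "\<dots> = (?S * V) * transpose_mat V - ((P * ?S') * V') * transpose_mat V"
      using minus_mult_distrib_mat[of "?S * V" "d 1" "d 0" "(P * ?S') * V'" "transpose_mat V" "d 0"] S Vc PS V'c Vt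
      by simp
    also have "\<dots> = ?S - M" using e3 e4 by simp
    finally show ?thesis .
  qed
  have f1: "frob_sq (?X - ?X') = frob_sq (?S - M)"
  proof -
    have "frob_sq (?X - ?X') = frob_sq (transpose_mat U * (?X - ?X'))"
      using frob_left[OF orth_transpose[OF U] D] by simp
    also have "\<dots> = frob_sq ((transpose_mat U * (?X - ?X')) * transpose_mat V)"
      using frob_right[OF orth_transpose[OF V], of "transpose_mat U * (?X - ?X')" "d 1"] Ut D by simp
    finally show ?thesis using key by simp
  qed
  have fM: "frob_sq M = (\<Sum>i<mm. (\<sigma>' $ i)^2)"
  proof -
    have "frob_sq M = frob_sq (P * ?S')" unfolding M_def using frob_right[OF R PS] .
    also have "\<dots> = frob_sq ?S'" using frob_left[OF P S'] .
    finally show ?thesis using frob_Sig1[OF m0 m1] by simp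
  qed
  have Mii: "M $$ (i,i) = (\<Sum>k<mm. P $$ (i,k) * \<sigma>' $ k * R $$ (k,i))" if i: "i < mm" for i
  proof -
    have i0: "i < d 0" and i1: "i < d 1" using i m0 m1 by auto
    have "M $$ (i,i) = (\<Sum>k<d 0. (P * ?S') $$ (i,k) * R $$ (k,i))"
      unfolding M_def using mult_entry[OF PS Rc i1 i0] .
    also have "\<dots> = (\<Sum>k<d 0. if k < mm then P $$ (i,k) * \<sigma>' $ k * R $$ (k,i) else 0)"
    proof (rule sum.cong)
      fix k assume "k \<in> {..<d 0}"
      then have k: "k < d 0" by simp
      have "(P * ?S') $$ (i,k) = (if k < mm then P $$ (i,k) * \<sigma>' $ k else 0)"
        using Sig_right[of P "d 1" d 1 i k L \<sigma>'] Pc i1 k m1 by simp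
      then show "(P * ?S') $$ (i,k) * R $$ (k,i) = (if k < mm then P $$ (i,k) * \<sigma>' $ k * R $$ (k,i) else 0)"
        by simp
    qed simp
    also have "\<dots> = (\<Sum>k<mm. P $$ (i,k) * \<sigma>' $ k * R $$ (k,i))" using m0 by (simp add: sum_restrict)
    finally show ?thesis .
  qed
  define Mx where "Mx i k = ((P $$ (i,k))^2 + (R $$ (k,i))^2) / 2" for i k
  have cross_le: "(\<Sum>i<mm. \<sigma> $ i * M $$ (i,i)) \<le> (\<Sum>i<mm. \<sigma> $ i * \<sigma>' $ i)"
  proof -
    have "(\<Sum>i<mm. \<sigma> $ i * M $$ (i,i)) = (\<Sum>i<mm. \<Sum>k<mm. \<sigma> $ i * \<sigma>' $ k * (P $$ (i,k) * R $$ (k,i)))"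
      using Mii by (simp add: sum_distrib_left algebra_simps)
    also have "\<dots> \<le> (\<Sum>i<mm. \<Sum>k<mm. \<sigma> $ i * \<sigma>' $ k * Mx i k)"
    proof (intro sum_mono)
      fix i k assume "i \<in> {..<mm}" "k \<in> {..<mm}"
      then have nn: "0 \<le> \<sigma> $ i * \<sigma>' $ k" using sn sn' by simp
      have "P $$ (i,k) * R $$ (k,i) \<le> Mx i k"
      proof -
        have "0 \<le> (P $$ (i,k) - R $$ (k,i))^2" by simp
        then show ?thesis unfolding Mx_def by (simp add: power2_eq_square algebra_simps)
      qed
      then show "\<sigma> $ i * \<sigma>' $ k * (P $$ (i,k) * R $$ (k,i)) \<le> \<sigma> $ i * \<sigma>' $ k * Mx i k"
        using nn by (rule mult_left_mono)
    qed
    also have "\<dots> \<le> (\<Sum>i<mm. \<sigma> $ i * \<sigma>' $ i)"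
    proof (rule rearr[OF sd sn sd' sn'])
      show "\<forall>i k. 0 \<le> Mx i k" unfolding Mx_def by simp
      show "\<forall>i<mm. (\<Sum>k<mm. Mx i k) \<le> 1"
      proof (intro allI impI)
        fix i assume i: "i < mm"
        have a: "(\<Sum>k<mm. (P $$ (i,k))^2) \<le> (\<Sum>k<d 1. (P $$ (i,k))^2)"
          using m1 by (intro sum_mono2) auto
        have b: "(\<Sum>k<mm. (R $$ (k,i))^2) \<le> (\<Sum>k<d 0. (R $$ (k,i))^2)"
          using m0 by (intro sum_mono2) auto
        have "(\<Sum>k<mm. Mx i k) = ((\<Sum>k<mm. (P $$ (i,k))^2) + (\<Sum>k<mm. (R $$ (k,i))^2)) / 2"
          unfolding Mx_def sum_divide_distrib[symmetric] sum.distrib by simp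
        also have "\<dots> \<le> (1 + 1) / 2"
          using a b orth_sum_row[OF P, of i] orth_sum_col[OF R, of i] i m0 m1 by simp
        finally show "(\<Sum>k<mm. Mx i k) \<le> 1" by simp
      qed
      show "\<forall>k<mm. (\<Sum>i<mm. Mx i k) \<le> 1"
      proof (intro allI impI)
        fix k assume k: "k < mm"
        have a: "(\<Sum>i<mm. (P $$ (i,k))^2) \<le> (\<Sum>i<d 1. (P $$ (i,k))^2)"
          using m1 by (intro sum_mono2) auto
        have b: "(\<Sum>i<mm. (R $$ (k,i))^2) \<le> (\<Sum>i<d 0. (R $$ (k,i))^2)"
          using m0 by (intro sum_mono2) auto
        have "(\<Sum>i<mm. Mx i k) = ((\<Sum>i<mm. (P $$ (i,k))^2) + (\<Sum>i<mm. (R $$ (k,i))^2)) / 2"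
          unfolding Mx_def sum_divide_distrib[symmetric] sum.distrib by simp
        also have "\<dots> \<le> (1 + 1) / 2"
          using a b orth_sum_col[OF P, of k] orth_sum_row[OF R, of k] k m0 m1 by simp
        finally show "(\<Sum>i<mm. Mx i k) \<le> 1" by simp
      qed
    qed
    finally show ?thesis .
  qed
  have "frob_sq (?X - ?X') = (\<Sum>i<mm. (\<sigma> $ i)^2) + (\<Sum>i<mm. (\<sigma>' $ i)^2) - 2 * (\<Sum>i<mm. \<sigma> $ i * M $$ (i,i))"
    using f1 frob_diff[OF S Mc] frob_Sig1[OF m0 m1] fM cross_Sig1[OF m0 m1 Mc] by simp
  also have "\<dots> \<ge> (\<Sum>i<mm. (\<sigma> $ i)^2) + (\<Sum>i<mm. (\<sigma>' $ i)^2) - 2 * (\<Sum>i<mm. \<sigma> $ i * \<sigma>' $ i)"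
    using cross_le by simp
  moreover have "(\<Sum>i<mm. (\<sigma> $ i)^2) + (\<Sum>i<mm. (\<sigma>' $ i)^2) - 2 * (\<Sum>i<mm. \<sigma> $ i * \<sigma>' $ i)
      = (\<Sum>i<mm. (\<sigma> $ i - \<sigma>' $ i)^2)"
    by (simp add: power2_diff sum.distrib sum_subtractf sum_distrib_left algebra_simps)
  ultimately show ?thesis by linarith
qed

end


lemma ext_perm:
  fixes U S :: "nat set" and phi :: "nat \<Rightarrow> nat" and c :: "nat \<Rightarrow> real"
  assumes finU: "finite U" and SU: "S \<subseteq> U" and inj: "inj_on phi S" and img: "phi ` S \<subseteq> U"
    and cp: "\<forall>j\<in>S. c (phi j) = c j"
  shows "\<exists>g. g permutes U \<and> (\<forall>j\<in>S. g j = phi j) \<and> (\<forall>j\<in>U. c (g j) = c j)"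
proof -
  define A where "A v = {x \<in> U - S. c x = v}" for v
  define B where "B v = {x \<in> U - phi ` S. c x = v}" for v
  have cardAB: "card (A v) = card (B v)" for v
  proof -
    let ?C = "{x \<in> U. c x = v}"
    have finC: "finite ?C" using finU by simp
    have c1: "?C = {x \<in> S. c x = v} \<union> A v" using SU unfolding A_def by auto
    have c2: "?C = {x \<in> phi ` S. c x = v} \<union> B v" using img unfolding B_def by auto
    have e: "{x \<in> phi ` S. c x = v} = phi ` {x \<in> S. c x = v}" using cp by auto
    have fS: "finite {x \<in> S. c x = v}" using finite_subset[OF SU finU] by simp
    have k1: "card {x \<in> phi ` S. c x = v} = card {x \<in> S. c x = v}"
      unfolding e by (rule card_image) (rule inj_on_subset[OF inj], auto)
    have fA: "finite (A v)" using finU unfolding A_def by simp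
    have fB: "finite (B v)" using finU unfolding B_def by simp
    have fE: "finite {x \<in> phi ` S. c x = v}" unfolding e using fS by simp
    have "card ?C = card {x \<in> S. c x = v} + card (A v)"
      unfolding c1 by (rule card_Un_disjoint) (use fS fA in \<open>auto simp: A_def\<close>)
    moreover have "card ?C = card {x \<in> phi ` S. c x = v} + card (B v)"
      unfolding c2 using fE fB by (subst card_Un_disjoint) (auto simp: B_def)
    ultimately show ?thesis using k1 by simp
  qed
  have "\<forall>v. \<exists>h. bij_betw h (A v) (B v)"
  proof
    fix v
    show "\<exists>h. bij_betw h (A v) (B v)"
      by (rule finite_same_card_bij) (use finU cardAB in \<open>auto simp: A_def B_def\<close>)
  qed
  then obtain H where H: "\<And>v. bij_betw (H v) (A v) (B v)" by metis
  define g where "g x = (if x \<in> S then phi x else if x \<in> U then H (c x) x else x)" for x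
  have gB: "x \<in> U - S \<Longrightarrow> g x \<in> B (c x)" for x
    using H[of "c x"] unfolding g_def bij_betw_def A_def by auto
  have gU: "g ` U \<subseteq> U"
  proof
    fix z assume "z \<in> g ` U"
    then obtain x where x: "x \<in> U" "z = g x" by auto
    show "z \<in> U"
    proof (cases "x \<in> S")
      case True then show ?thesis using x img by (auto simp: g_def)
    next
      case False then show ?thesis using gB[of x] x by (auto simp: B_def)
    qed
  qed
  have ginj: "inj_on g U"
  proof (rule inj_onI)
    fix x x' assume xs: "x \<in> U" "x' \<in> U" "g x = g x'"
    show "x = x'"
    proof (cases "x \<in> S")
      case True
      show ?thesis
      proof (cases "x' \<in> S")
        case True
        then show ?thesis using \<open>x \<in> S\<close> xs inj by (auto simp: g_def inj_on_def)
      next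
        case False
        then have "g x' \<in> B (c x')" using gB[of x'] xs(2) by blast
        moreover have "g x \<in> phi ` S" using \<open>x \<in> S\<close> by (auto simp: g_def)
        ultimately show ?thesis using xs by (auto simp: B_def)
      qed
    next
      case False
      show ?thesis
      proof (cases "x' \<in> S")
        case True
        then have "g x' \<in> phi ` S" by (auto simp: g_def)
        moreover have "g x \<in> B (c x)" using gB[of x] xs(1) False by blast
        ultimately show ?thesis using xs by (auto simp: B_def)
      next
        case False': False
        have b1: "g x \<in> B (c x)" using gB[of x] xs(1) False by blast
        have b2: "g x' \<in> B (c x')" using gB[of x'] xs(2) False' by blast
        have "c x = c x'" using b1 b2 xs by (auto simp: B_def)
        moreover have "x \<in> A (c x)" "x' \<in> A (c x)" using xs False False' \<open>c x = c x'\<close> by (auto simp: A_def)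
        moreover have "H (c x) x = H (c x) x'" using xs False False' \<open>c x = c x'\<close> by (simp add: g_def)
        ultimately show ?thesis using H[of "c x"] unfolding bij_betw_def inj_on_def by blast
      qed
    qed
  qed
  have "g ` U = U" using endo_inj_surj[OF finU gU ginj] .
  then have "bij_betw g U U" using ginj by (simp add: bij_betw_def)
  then have perm: "g permutes U" by (rule bij_imp_permutes) (simp add: g_def SU[THEN subsetD] | use SU in blast)+
  have "\<forall>j\<in>U. c (g j) = c j"
  proof
    fix j assume j: "j \<in> U"
    show "c (g j) = c j"
    proof (cases "j \<in> S")
      case True then show ?thesis using cp by (simp add: g_def)
    next
      case False then show ?thesis using gB[of j] j by (auto simp: B_def)
    qed
  qed
  then show ?thesis using perm by (auto simp: g_def)
qed

lemma root_y:
  fixes s lam y1 y2 :: real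
  assumes "lam > 0" "s > 0"
    "s ^ (2*L - 1) - sqrt lam * y1 * s ^ (L - 1) + lam * s = 0"
    "s ^ (2*L - 1) - sqrt lam * y2 * s ^ (L - 1) + lam * s = 0"
  shows "y1 = y2"
proof -
  have "sqrt lam * s ^ (L - 1) * (y1 - y2) = 0" using assms(3,4) by (simp add: algebra_simps)
  moreover have "sqrt lam * s ^ (L - 1) \<noteq> 0" using assms(1,2) by simp
  ultimately show ?thesis by (metis eq_iff_diff_eq_0 mult_eq_0_iff)
qed

lemma root_pos:
  fixes s lam y :: real
  assumes "lam > 0" "s > 0"
    "s ^ (2*L - 1) - sqrt lam * y * s ^ (L - 1) + lam * s = 0"
  shows "y > 0"
proof -
  have "sqrt lam * y * s ^ (L - 1) = s ^ (2*L - 1) + lam * s" using assms(3) by simp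
  moreover have "s ^ (2*L - 1) + lam * s > 0" using assms(1,2) by (simp add: add_nonneg_pos)
  ultimately have "sqrt lam * s ^ (L - 1) * y > 0" by (simp add: algebra_simps)
  moreover have "sqrt lam * s ^ (L - 1) > 0" using assms(1,2) by simp
  ultimately show ?thesis using zero_less_mult_pos by blast
qed

lemma sig_perm_eq1:
  assumes m0: "dmin d L \<le> d 0" and f1: "\<forall>j<dmin d L. f1 j < dmin d L" and f2: "\<forall>j<dmin d L. f2 j < dmin d L"
    and cond: "\<forall>i<dmin d L. \<sigma> $ i \<noteq> 0 \<longrightarrow> (\<forall>j<dmin d L. (i = f1 j) = (i = f2 j))"
  shows "Sig d L \<sigma> 1 * Fb (d 0) (dmin d L) (permmat (dmin d L) f1) = Sig d L \<sigma> 1 * Fb (d 0) (dmin d L) (permmat (dmin d L) f2)"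
proof -
  let ?m = "dmin d L"
  have F1: "Fb (d 0) ?m (permmat ?m f1) \<in> carrier_mat (d 0) (d 0)" using Fb_carrier[OF permmat_carrier m0] .
  have F2: "Fb (d 0) ?m (permmat ?m f2) \<in> carrier_mat (d 0) (d 0)" using Fb_carrier[OF permmat_carrier m0] .
  show ?thesis
  proof (rule eq_matI)
    fix i j assume ij: "i < dim_row (Sig d L \<sigma> 1 * Fb (d 0) ?m (permmat ?m f2))"
      "j < dim_col (Sig d L \<sigma> 1 * Fb (d 0) ?m (permmat ?m f2))"
    then have i: "i < d 1" and j: "j < d 0" using F2 Sig_carrier[of d L \<sigma> 1] by auto
    have e1: "(Sig d L \<sigma> 1 * Fb (d 0) ?m (permmat ?m f1)) $$ (i,j) = (if i < ?m then \<sigma> $ i * Fb (d 0) ?m (permmat ?m f1) $$ (i,j) else 0)"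
      using Sig_left[of _ d 1 "d 0" i j L \<sigma>] F1 i j m0 by simp
    have e2: "(Sig d L \<sigma> 1 * Fb (d 0) ?m (permmat ?m f2)) $$ (i,j) = (if i < ?m then \<sigma> $ i * Fb (d 0) ?m (permmat ?m f2) $$ (i,j) else 0)"
      using Sig_left[of _ d 1 "d 0" i j L \<sigma>] F2 i j m0 by simp
    show "(Sig d L \<sigma> 1 * Fb (d 0) ?m (permmat ?m f1)) $$ (i,j) = (Sig d L \<sigma> 1 * Fb (d 0) ?m (permmat ?m f2)) $$ (i,j)"
    proof (cases "i < ?m \<and> \<sigma> $ i \<noteq> 0")
      case True
      have "Fb (d 0) ?m (permmat ?m f1) $$ (i,j) = Fb (d 0) ?m (permmat ?m f2) $$ (i,j)"
        using True cond j m0 by (simp add: Fb_index[OF permmat_carrier m0])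
      then show ?thesis using e1 e2 by simp
    next
      case False then show ?thesis using e1 e2 by auto
    qed
  qed (use F1 F2 in auto)
qed

lemma sig_perm_eq2:
  assumes mL: "dmin d L \<le> d L"
    and cond: "\<forall>i<dmin d L. \<sigma> $ i \<noteq> 0 \<longrightarrow> (\<forall>j<dmin d L. (i = f1 j) = (i = f2 j))"
  shows "Fb (d L) (dmin d L) (transpose_mat (permmat (dmin d L) f1)) * Sig d L \<sigma> L
       = Fb (d L) (dmin d L) (transpose_mat (permmat (dmin d L) f2)) * Sig d L \<sigma> L"
proof -
  let ?m = "dmin d L"
  have T1: "transpose_mat (permmat ?m f1) \<in> carrier_mat ?m ?m" and T2: "transpose_mat (permmat ?m f2) \<in> carrier_mat ?m ?m"
    by auto
  have F1: "Fb (d L) ?m (transpose_mat (permmat ?m f1)) \<in> carrier_mat (d L) (d L)" using Fb_carrier[OF T1 mL] .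
  have F2: "Fb (d L) ?m (transpose_mat (permmat ?m f2)) \<in> carrier_mat (d L) (d L)" using Fb_carrier[OF T2 mL] .
  show ?thesis
  proof (rule eq_matI)
    fix i j assume ij: "i < dim_row (Fb (d L) ?m (transpose_mat (permmat ?m f2)) * Sig d L \<sigma> L)"
      "j < dim_col (Fb (d L) ?m (transpose_mat (permmat ?m f2)) * Sig d L \<sigma> L)"
    then have i: "i < d L" and j: "j < d (L - 1)" using F2 Sig_carrier[of d L \<sigma> L] by auto
    have e1: "(Fb (d L) ?m (transpose_mat (permmat ?m f1)) * Sig d L \<sigma> L) $$ (i,j)
        = (if j < ?m then Fb (d L) ?m (transpose_mat (permmat ?m f1)) $$ (i,j) * \<sigma> $ j else 0)"
      using Sig_right[OF F1 i j mL] .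
    have e2: "(Fb (d L) ?m (transpose_mat (permmat ?m f2)) * Sig d L \<sigma> L) $$ (i,j)
        = (if j < ?m then Fb (d L) ?m (transpose_mat (permmat ?m f2)) $$ (i,j) * \<sigma> $ j else 0)"
      using Sig_right[OF F2 i j mL] .
    show "(Fb (d L) ?m (transpose_mat (permmat ?m f1)) * Sig d L \<sigma> L) $$ (i,j) =
          (Fb (d L) ?m (transpose_mat (permmat ?m f2)) * Sig d L \<sigma> L) $$ (i,j)"
    proof (cases "j < ?m \<and> \<sigma> $ j \<noteq> 0")
      case True
      have "Fb (d L) ?m (transpose_mat (permmat ?m f1)) $$ (i,j) = Fb (d L) ?m (transpose_mat (permmat ?m f2)) $$ (i,j)"
        using True cond i mL by (simp add: Fb_index[OF T1 mL] Fb_index[OF T2 mL])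
      then show ?thesis using e1 e2 by simp
    next
      case False then show ?thesis using e1 e2 by auto
    qed
  qed (use F1 F2 in auto)
qed


lemma sqs_snoc: "sqs (As @ [C]) (zs @ [n]) \<longleftrightarrow> sqs As zs \<and> C \<in> carrier_mat n n"
  unfolding sqs_def by (auto simp: nth_append)

lemma orths_snoc: "orths (As @ [C]) (zs @ [n]) \<longleftrightarrow> orths As zs \<and> orth_mat n C"
  unfolding orths_def by (auto simp: nth_append)

lemma sqs_len: "sqs As zs \<Longrightarrow> length As = length zs" by (simp add: sqs_def)

lemma G_decomp:
  fixes m N :: nat and y :: "nat \<Rightarrow> real" and g :: "nat \<Rightarrow> nat"
  assumes ys: "\<forall>i j. i \<le> j \<longrightarrow> j < m \<longrightarrow> y j \<le> y i" and ynn: "\<forall>i<m. y i \<ge> 0"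
    and g: "g permutes {..<m}" and gy: "\<forall>j<m. y (g j) = y j" and mN: "m \<le> N"
  shows "\<exists>As C. sqs As (ns m y) \<and> orths As (ns m y) \<and> orth_mat (N - rY m y) C \<and>
     Fb N m (permmat m g) = blkdiag (As @ [C]) \<and>
     blkdiag As = mat (rY m y) (rY m y) (\<lambda>(i,j). if i = g j then 1 else 0)"
proof -
  let ?r = "rY m y" and ?ns = "ns m y"
  let ?nz = "?ns @ [N - ?r]"
  let ?F = "Fb N m (permmat m g)"
  have rm: "?r \<le> m" using r_le[OF ys ynn] .
  have sns: "sum_list ?ns = ?r" using sum_ns[OF ys ynn] .
  have sns0: "sum_list ?nz = N" using sns rm mN by simp
  have Fc: "?F \<in> carrier_mat N N" using Fb_carrier[OF permmat_carrier mN] .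
  have Fo: "orth_mat N ?F" using Fb_orth[OF permmat_orth[OF g] mN] .
  have blk_lo: "i < ?r \<Longrightarrow> blk ?nz i = blk ?ns i" for i using blk_append[of i ?ns] sns by simp
  have blk_hi: "?r \<le> i \<Longrightarrow> i < N \<Longrightarrow> blk ?nz i = length ?ns" for i
    using blk_append2[of ?ns i "N - ?r"] sns rm mN by simp
  have gm: "j < m \<Longrightarrow> g j < m" for j using permutes_lt[OF g] .
  have struct: "\<forall>i j. i < sum_list ?nz \<longrightarrow> j < sum_list ?nz \<longrightarrow> blk ?nz i \<noteq> blk ?nz j \<longrightarrow> ?F $$ (i,j) = 0"
  proof (intro allI impI)
    fix i j assume i: "i < sum_list ?nz" and j: "j < sum_list ?nz" and b: "blk ?nz i \<noteq> blk ?nz j"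
    then have iN: "i < N" and jN: "j < N" using sns0 by auto
    have Fij: "?F $$ (i,j) = (if i < m \<and> j < m then permmat m g $$ (i,j) else if i < m \<or> j < m then 0 else (if i = j then 1 else 0))"
      using Fb_index[OF permmat_carrier mN iN jN] .
    show "?F $$ (i,j) = 0"
    proof (cases "i < m \<and> j < m")
      case True
      have "i \<noteq> g j"
      proof
        assume ig: "i = g j"
        then have yij: "y i = y j" using gy True by simp
        show False
        proof (cases "j < ?r")
          case True
          then have "0 < y j" using pos_iff[OF ys ynn, of j] \<open>i < m \<and> j < m\<close> by simp
          then have "i < ?r" using pos_iff[OF ys ynn, of i] \<open>i < m \<and> j < m\<close> yij by simp
          then have "blk ?ns i = blk ?ns j" using blk_same[OF ys ynn _ True yij] by simp
          then show False using b blk_lo \<open>i < ?r\<close> True by simp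
        next
          case False
          then have "y j = 0" using y_zero[OF ys ynn, of j] \<open>i < m \<and> j < m\<close> by simp
          then have "\<not> i < ?r" using pos_iff[OF ys ynn, of i] \<open>i < m \<and> j < m\<close> yij by simp
          then show False using b blk_hi False iN jN by simp
        qed
      qed
      then show ?thesis using Fij True by simp
    next
      case False
      then show ?thesis using Fij b by auto
    qed
  qed
  obtain Ps where Ps: "sqs Ps ?nz" "?F = blkdiag Ps"
    using blkdiag_decomp[of ?F ?nz] Fc sns0 struct by auto
  have oPs: "orths Ps ?nz" using blkdiag_orth_parts[OF Ps(1)] Fo Ps(2) sns0 by simp
  have "length Ps = Suc (length ?ns)" using sqs_len[OF Ps(1)] by simp
  then obtain As C where AC: "Ps = As @ [C]"
    by (metis append_butlast_last_id length_0_conv nat.distinct(1))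
  have sA: "sqs As ?ns" and cC: "C \<in> carrier_mat (N - ?r) (N - ?r)" using Ps(1) AC sqs_snoc by auto
  have oA: "orths As ?ns" and oC: "orth_mat (N - ?r) C" using oPs AC orths_snoc by auto
  have bA: "blkdiag As \<in> carrier_mat ?r ?r" using blkdiag_carrier[OF sA] sns by simp
  have F4: "?F = four_block_mat (blkdiag As) (0\<^sub>m ?r (N - ?r)) (0\<^sub>m (N - ?r) ?r) C"
    using blkdiag_snoc[OF sA cC] Ps(2) AC sns by simp
  have "blkdiag As = mat ?r ?r (\<lambda>(i,j). if i = g j then 1 else 0)"
  proof (rule eq_matI)
    fix i j assume "i < dim_row (mat ?r ?r (\<lambda>(i,j). if i = g j then (1::real) else 0))"
      "j < dim_col (mat ?r ?r (\<lambda>(i,j). if i = g j then (1::real) else 0))"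
    then have ij: "i < ?r" "j < ?r" by auto
    have "?F $$ (i,j) = blkdiag As $$ (i,j)" using F4 ij bA cC by simp
    moreover have "?F $$ (i,j) = (if i = g j then 1 else 0)"
      using Fb_index[OF permmat_carrier mN, of i j] ij rm mN by simp
    ultimately show "blkdiag As $$ (i,j) = mat ?r ?r (\<lambda>(i,j). if i = g j then 1 else 0) $$ (i,j)"
      using ij by simp
  qed (use bA in auto)
  then show ?thesis using sA oA oC Ps(2) AC by blast
qed


lemma ns_nth: "\<forall>i j. i \<le> j \<longrightarrow> j < m \<longrightarrow> y j \<le> y i \<Longrightarrow> \<forall>i<m. 0 \<le> y i \<Longrightarrow>
  k < pY m y \<Longrightarrow> ns m y ! k = hY m y (Suc k)"
  by (simp add: ns_def del: upt_Suc)

lemma Bset_D: "(\<sigma>, Pm) \<in> Bset L m lam y \<Longrightarrow> \<sigma> \<in> carrier_vec m \<and> perm_mat m Pm \<and>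
      (\<exists>a \<in> Aset L m lam y. \<sigma> = Pm *\<^sub>v a) \<and> (\<forall>i j. i \<le> j \<longrightarrow> j < m \<longrightarrow> \<sigma> $ j \<le> \<sigma> $ i)"
  unfolding Bset_def by simp

lemma Aset_D: "a \<in> Aset L m lam y \<Longrightarrow> a \<in> carrier_vec m \<and> (\<forall>i<m. a $ i \<ge> 0 \<and>
      (a $ i) ^ (2*L - 1) - sqrt lam * y i * (a $ i) ^ (L - 1) + lam * a $ i = 0)"
  unfolding Aset_def by simp

lemma ns_length: "\<forall>i j. i \<le> j \<longrightarrow> j < m \<longrightarrow> y j \<le> y i \<Longrightarrow> \<forall>i<m. 0 \<le> y i \<Longrightarrow>
  length (ns m y) = pY m y" by (simp add: ns_def)

declare upt_Suc[simp del]

lemma Wset_sub: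
  fixes L :: nat and d :: "nat \<Rightarrow> nat" and lam :: real and y :: "nat \<Rightarrow> real"
    and \<sigma> :: "real vec" and Pm Pm' :: "real mat"
  assumes L2: "L \<ge> 2" and lam: "lam > 0"
    and ys: "\<forall>i j. i \<le> j \<longrightarrow> j < dmin d L \<longrightarrow> y j \<le> y i" and ynn: "\<forall>i<dmin d L. y i \<ge> 0"
    and B1: "(\<sigma>, Pm) \<in> Bset L (dmin d L) lam y" and B2: "(\<sigma>, Pm') \<in> Bset L (dmin d L) lam y"
  shows "Wset d L y \<sigma> Pm \<subseteq> Wset d L y \<sigma> Pm'"
proof -
  let ?m = "dmin d L"
  let ?r = "rY ?m y" and ?p = "pY ?m y" and ?ns = "ns ?m y"
  have m0: "?m \<le> d 0" and mL: "?m \<le> d L" by (auto simp: dmin_def)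
  note b1 = Bset_D[OF B1] and b2 = Bset_D[OF B2]
  obtain p1 where p1: "p1 permutes {..<?m}" "Pm = permmat ?m p1"
    using perm_mat_permmat[OF conjunct1[OF conjunct2[OF b1]]] by (elim exE conjE)
  obtain p2 where p2: "p2 permutes {..<?m}" "Pm' = permmat ?m p2"
    using perm_mat_permmat[OF conjunct1[OF conjunct2[OF b2]]] by (elim exE conjE)
  obtain a where a: "a \<in> Aset L ?m lam y" "\<sigma> = Pm *\<^sub>v a"
    using conjunct1[OF conjunct2[OF conjunct2[OF b1]]] by (elim bexE)
  obtain a' where a': "a' \<in> Aset L ?m lam y" "\<sigma> = Pm' *\<^sub>v a'"
    using conjunct1[OF conjunct2[OF conjunct2[OF b2]]] by (elim bexE)
  note ad = Aset_D[OF a(1)] and a'd = Aset_D[OF a'(1)]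
  have ac: "a \<in> carrier_vec ?m" and a'c: "a' \<in> carrier_vec ?m" using conjunct1[OF ad] conjunct1[OF a'd] by auto
  have aeq: "\<forall>i<?m. a $ i \<ge> 0 \<and> (a $ i) ^ (2*L - 1) - sqrt lam * y i * (a $ i) ^ (L - 1) + lam * a $ i = 0"
    using conjunct2[OF ad] .
  have a'eq: "\<forall>i<?m. a' $ i \<ge> 0 \<and> (a' $ i) ^ (2*L - 1) - sqrt lam * y i * (a' $ i) ^ (L - 1) + lam * a' $ i = 0"
    using conjunct2[OF a'd] .
  have sa: "\<sigma> $ i = a $ (Hilbert_Choice.inv p1 i)" if "i < ?m" for i
    using permmat_vec[OF p1(1) that ac] a(2) p1(2) by simp
  have sa': "\<sigma> $ i = a' $ (Hilbert_Choice.inv p2 i)" if "i < ?m" for i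
    using permmat_vec[OF p2(1) that a'c] a'(2) p2(2) by simp
  have p1lt: "j < ?m \<Longrightarrow> p1 j < ?m" for j using permutes_lt[OF p1(1)] .
  have p2lt: "j < ?m \<Longrightarrow> p2 j < ?m" for j using permutes_lt[OF p2(1)] .
  have ip1lt: "j < ?m \<Longrightarrow> Hilbert_Choice.inv p1 j < ?m" for j using permutes_lt[OF permutes_inv[OF p1(1)]] .
  have ip2lt: "j < ?m \<Longrightarrow> Hilbert_Choice.inv p2 j < ?m" for j using permutes_lt[OF permutes_inv[OF p2(1)]] .
  define S where "S = {j. j < ?m \<and> 0 < a $ j}"
  define phi where "phi j = Hilbert_Choice.inv p2 (p1 j)" for j
  have phiS: "phi ` S \<subseteq> {..<?m}" unfolding S_def phi_def using ip2lt p1lt by auto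
  have phiinj: "inj_on phi S"
  proof (rule inj_onI)
    fix x z assume "x \<in> S" "z \<in> S" "phi x = phi z"
    then have "p1 x = p1 z" unfolding phi_def
      using permutes_inj[OF permutes_inv[OF p2(1)]] by (simp add: inj_eq)
    then show "x = z" using permutes_inj[OF p1(1)] by (simp add: inj_eq)
  qed
  have aphi: "a' $ (phi j) = a $ j" if "j < ?m" for j
  proof -
    have "\<sigma> $ (p1 j) = a $ j" using sa[OF p1lt[OF that]] permutes_inverses(2)[OF p1(1)] by simp
    moreover have "\<sigma> $ (p1 j) = a' $ (phi j)" using sa'[OF p1lt[OF that]] by (simp add: phi_def)
    ultimately show ?thesis by simp
  qed
  have phiy: "\<forall>j\<in>S. y (phi j) = y j"
  proof
    fix j assume j: "j \<in> S"
    then have jm: "j < ?m" and apos: "0 < a $ j" unfolding S_def by auto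
    have pm: "phi j < ?m" using phiS j by auto
    show "y (phi j) = y j"
      using root_y[OF lam apos, of L "y (phi j)" "y j"] a'eq[rule_format, OF pm] aeq[rule_format, OF jm] aphi[OF jm]
      by simp
  qed
  obtain g where g: "g permutes {..<?m}" "\<forall>j\<in>S. g j = phi j" "\<forall>j\<in>{..<?m}. y (g j) = y j"
    using ext_perm[of "{..<?m}" S phi y] phiS phiinj phiy unfolding S_def by auto
  have glt: "j < ?m \<Longrightarrow> g j < ?m" for j using permutes_lt[OF g(1)] .
  have gy: "\<forall>j<?m. y (g j) = y j" using g(3) by auto
  have cond: "\<forall>i<?m. \<sigma> $ i \<noteq> 0 \<longrightarrow> (\<forall>j<?m. (i = p1 j) = (i = (p2 \<circ> g) j))"
  proof (intro allI impI)
    fix i j assume i: "i < ?m" and si: "\<sigma> $ i \<noteq> 0" and j: "j < ?m"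
    define j0 where "j0 = Hilbert_Choice.inv p1 i"
    have j0m: "j0 < ?m" using ip1lt[OF i] j0_def by simp
    have p1j0: "p1 j0 = i" using permutes_inverses(1)[OF p1(1)] j0_def by simp
    have "a $ j0 = \<sigma> $ i" using sa[OF i] j0_def by simp
    then have "0 < a $ j0" using si aeq j0m by force
    then have j0S: "j0 \<in> S" using j0m unfolding S_def by simp
    have gj0: "g j0 = Hilbert_Choice.inv p2 i" using g(2) j0S p1j0 by (simp add: phi_def)
    have p2g: "p2 (g j0) = i" using gj0 permutes_inverses(1)[OF p2(1)] by simp
    show "(i = p1 j) = (i = (p2 \<circ> g) j)"
    proof
      assume "i = p1 j"
      then have "j = j0" using p1j0 permutes_inj[OF p1(1)] by (metis inj_eq)
      then show "i = (p2 \<circ> g) j" using p2g by simp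
    next
      assume "i = (p2 \<circ> g) j"
      then have "p2 (g j) = p2 (g j0)" using p2g by simp
      then have "g j = g j0" using permutes_inj[OF p2(1)] by (metis inj_eq)
      then have "j = j0" using permutes_inj[OF g(1)] by (metis inj_eq)
      then show "i = p1 j" using p1j0 by simp
    qed
  qed
  have p2g_lt: "\<forall>j<?m. (p2 \<circ> g) j < ?m" using p2lt glt by simp
  have E1: "Sig d L \<sigma> 1 * Fb (d 0) ?m (permmat ?m p1) = Sig d L \<sigma> 1 * Fb (d 0) ?m (permmat ?m (p2 \<circ> g))"
    by (rule sig_perm_eq1[OF m0 _ p2g_lt cond]) (use p1lt in auto)
  have E2: "Fb (d L) ?m (transpose_mat (permmat ?m p1)) * Sig d L \<sigma> L
       = Fb (d L) ?m (transpose_mat (permmat ?m (p2 \<circ> g))) * Sig d L \<sigma> L"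
    by (rule sig_perm_eq2[OF mL cond])
  obtain As0 C0 where D0: "sqs As0 ?ns" "orths As0 ?ns" "orth_mat (d 0 - ?r) C0"
     "Fb (d 0) ?m (permmat ?m g) = blkdiag (As0 @ [C0])"
     "blkdiag As0 = mat ?r ?r (\<lambda>(i,j). if i = g j then 1 else 0)"
    using G_decomp[OF ys ynn g(1) gy m0] by blast
  obtain AsL CL where DL: "sqs AsL ?ns" "orths AsL ?ns" "orth_mat (d L - ?r) CL"
     "Fb (d L) ?m (permmat ?m g) = blkdiag (AsL @ [CL])"
     "blkdiag AsL = mat ?r ?r (\<lambda>(i,j). if i = g j then 1 else 0)"
    using G_decomp[OF ys ynn g(1) gy mL] by blast
  have AsEq: "AsL = As0" using blkdiag_inj[OF DL(1) D0(1)] DL(5) D0(5) by simp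
  have rm: "?r \<le> ?m" using r_le[OF ys ynn] .
  have sns: "sum_list ?ns = ?r" using sum_ns[OF ys ynn] .
  have nslen: "length ?ns = ?p" by (rule ns_length[OF ys ynn])
  have As0len: "length As0 = ?p" using sqs_len[OF D0(1)] nslen by simp
  show ?thesis
  proof
    fix W assume W: "W \<in> Wset d L y \<sigma> Pm"
    obtain Q Ob Oh where WQ: "length W = L"
      "\<forall>l\<in>{2..L}. orth_mat (d (l - 1)) (Q l)"
      "\<forall>k\<in>{1..?p}. orth_mat (hY ?m y k) (Ob k)"
      "orth_mat (d 0 - ?r) (Ob (?p + 1))"
      "orth_mat (d L - ?r) Oh"
      "W ! 0 = Q 2 * Sig d L \<sigma> 1 * Fb (d 0) ?m Pm * blkdiag (map Ob [1..<?p + 2])"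
      "\<forall>l\<in>{2..L - 1}. W ! (l - 1) = Q (l + 1) * Sig d L \<sigma> l * transpose_mat (Q l)"
      "W ! (L - 1) = blkdiag (map (\<lambda>k. transpose_mat (Ob k)) [1..<?p + 1] @ [transpose_mat Oh])
                  * Fb (d L) ?m (transpose_mat Pm) * Sig d L \<sigma> L * transpose_mat (Q L)"
      using W unfolding Wset_def Let_def Fb_def by blast
    define Ob' where "Ob' k = (if k \<le> ?p then As0 ! (k - 1) * Ob k else C0 * Ob k)" for k
    define Oh' where "Oh' = CL * Oh"
    have oOb: "orth_mat (?ns ! k) (Ob (Suc k))" if "k < ?p" for k
      using WQ(3) that ns_nth[OF ys ynn that] by auto
    have oAs: "orth_mat (?ns ! k) (As0 ! k)" if "k < ?p" for k
      using D0(2) that As0len unfolding orths_def by auto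
    have oOb'1: "\<forall>k\<in>{1..?p}. orth_mat (hY ?m y k) (Ob' k)"
    proof
      fix k assume k: "k \<in> {1..?p}"
      then have k1: "k - 1 < ?p" and kk: "Suc (k - 1) = k" by auto
      have "orth_mat (?ns ! (k - 1)) (As0 ! (k - 1) * Ob k)"
        using orth_mult[OF oAs[OF k1] oOb[OF k1]] kk by simp
      then show "orth_mat (hY ?m y k) (Ob' k)" using ns_nth[OF ys ynn k1] kk k by (simp add: Ob'_def)
    qed
    have oOb'2: "orth_mat (d 0 - ?r) (Ob' (?p + 1))"
      using orth_mult[OF D0(3) WQ(4)] by (simp add: Ob'_def)
    have oOh': "orth_mat (d L - ?r) Oh'" unfolding Oh'_def using orth_mult[OF DL(3) WQ(5)] .
    let ?B = "blkdiag (map Ob [1..<?p + 2])"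
    let ?F0 = "Fb (d 0) ?m (permmat ?m g)"
    have sB: "sqs (map Ob [1..<?p + 2]) (?ns @ [d 0 - ?r])"
      unfolding sqs_def
    proof (intro conjI allI impI)
      show "length (map Ob [1..<?p + 2]) = length (?ns @ [d 0 - ?r])" using nslen by simp
      fix k assume k: "k < length (map Ob [1..<?p + 2])"
      then have k': "k \<le> ?p" by simp
      show "map Ob [1..<?p + 2] ! k \<in> carrier_mat ((?ns @ [d 0 - ?r]) ! k) ((?ns @ [d 0 - ?r]) ! k)"
      proof (cases "k < ?p")
        case True
        then show ?thesis using orth_carrier[OF oOb[OF True]] nslen by (simp add: nth_append)
      next
        case False
        then have "k = ?p" using k' by simp
        then show ?thesis using orth_carrier[OF WQ(4)] nslen by (simp add: nth_append)
      qed
    qed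
    have sP0: "sqs (As0 @ [C0]) (?ns @ [d 0 - ?r])" using D0(1) orth_carrier[OF D0(3)] sqs_snoc by simp
    have mapOb': "map Ob' [1..<?p + 2] = map2 (*) (As0 @ [C0]) (map Ob [1..<?p + 2])"
    proof (rule nth_equalityI)
      show "length (map Ob' [1..<?p + 2]) = length (map2 (*) (As0 @ [C0]) (map Ob [1..<?p + 2]))"
        using As0len by simp
      fix k assume "k < length (map Ob' [1..<?p + 2])"
      then have k: "k \<le> ?p" by simp
      show "map Ob' [1..<?p + 2] ! k = map2 (*) (As0 @ [C0]) (map Ob [1..<?p + 2]) ! k"
        using k As0len by (cases "k < ?p") (auto simp: Ob'_def nth_append)
    qed
    have sumB: "sum_list (?ns @ [d 0 - ?r]) = d 0" using sns rm m0 by simp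
    have Bc: "?B \<in> carrier_mat (d 0) (d 0)" using blkdiag_carrier[OF sB] sumB by simp
    have F0c: "?F0 \<in> carrier_mat (d 0) (d 0)" using Fb_carrier[OF permmat_carrier m0] .
    have B': "blkdiag (map Ob' [1..<?p + 2]) = ?F0 * ?B"
      using blkdiag_mult[OF sP0 sB] mapOb' D0(4) by simp
    have Q2: "Q 2 \<in> carrier_mat (d 1) (d 1)" using WQ(2) L2 orth_carrier by fastforce
    have S1: "Sig d L \<sigma> 1 \<in> carrier_mat (d 1) (d 0)" using Sig_carrier[of d L \<sigma> 1] by simp
    have QS: "Q 2 * Sig d L \<sigma> 1 \<in> carrier_mat (d 1) (d 0)" using Q2 S1 by simp
    have FP1: "Fb (d 0) ?m (permmat ?m p1) \<in> carrier_mat (d 0) (d 0)" using Fb_carrier[OF permmat_carrier m0] .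
    have FP2: "Fb (d 0) ?m (permmat ?m p2) \<in> carrier_mat (d 0) (d 0)" using Fb_carrier[OF permmat_carrier m0] .
    have FP2g: "Fb (d 0) ?m (permmat ?m (p2 \<circ> g)) \<in> carrier_mat (d 0) (d 0)" using Fb_carrier[OF permmat_carrier m0] .
    have W0: "W ! 0 = Q 2 * Sig d L \<sigma> 1 * Fb (d 0) ?m Pm' * blkdiag (map Ob' [1..<?p + 2])"
    proof -
      have "Q 2 * Sig d L \<sigma> 1 * Fb (d 0) ?m Pm' * blkdiag (map Ob' [1..<?p + 2])
          = (Q 2 * Sig d L \<sigma> 1) * Fb (d 0) ?m (permmat ?m p2) * (?F0 * ?B)" using B' p2 by simp
      also have "\<dots> = (Q 2 * Sig d L \<sigma> 1) * (Fb (d 0) ?m (permmat ?m p2) * (?F0 * ?B))"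
        using assoc_mult_mat[OF QS FP2 mult_carrier_mat[OF F0c Bc]] .
      also have "Fb (d 0) ?m (permmat ?m p2) * (?F0 * ?B) = (Fb (d 0) ?m (permmat ?m p2) * ?F0) * ?B"
        using assoc_mult_mat[OF FP2 F0c Bc] by simp
      also have "Fb (d 0) ?m (permmat ?m p2) * ?F0 = Fb (d 0) ?m (permmat ?m (p2 \<circ> g))"
        using Fb_mult[OF permmat_carrier permmat_carrier m0] permmat_mult[of ?m g p2] glt by simp
      also have "(Q 2 * Sig d L \<sigma> 1) * (Fb (d 0) ?m (permmat ?m (p2 \<circ> g)) * ?B)
          = Q 2 * (Sig d L \<sigma> 1 * Fb (d 0) ?m (permmat ?m (p2 \<circ> g)) * ?B)"
        using assoc_mult_mat[OF Q2 S1 mult_carrier_mat[OF FP2g Bc]] assoc_mult_mat[OF S1 FP2g Bc] by simp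
      also have "Sig d L \<sigma> 1 * Fb (d 0) ?m (permmat ?m (p2 \<circ> g)) = Sig d L \<sigma> 1 * Fb (d 0) ?m (permmat ?m p1)"
        using E1 by simp
      also have "Q 2 * (Sig d L \<sigma> 1 * Fb (d 0) ?m (permmat ?m p1) * ?B) = Q 2 * Sig d L \<sigma> 1 * Fb (d 0) ?m (permmat ?m p1) * ?B"
        using assoc_mult_mat[OF Q2 S1 FP1] assoc_mult_mat[OF QS FP1 Bc] assoc_mult_mat[OF S1 FP1 Bc]
          assoc_mult_mat[OF Q2 S1 mult_carrier_mat[OF FP1 Bc]] by simp
      finally show ?thesis using WQ(6) p1 by simp
    qed
    let ?OL = "map (\<lambda>k. transpose_mat (Ob k)) [1..<?p + 1] @ [transpose_mat Oh]"
    let ?OL' = "map (\<lambda>k. transpose_mat (Ob' k)) [1..<?p + 1] @ [transpose_mat Oh']"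
    let ?FL = "Fb (d L) ?m (permmat ?m g)"
    have sOL: "sqs ?OL (?ns @ [d L - ?r])"
      unfolding sqs_def
    proof (intro conjI allI impI)
      show "length ?OL = length (?ns @ [d L - ?r])" using nslen by simp
      fix k assume k: "k < length ?OL"
      then have k': "k \<le> ?p" by simp
      show "?OL ! k \<in> carrier_mat ((?ns @ [d L - ?r]) ! k) ((?ns @ [d L - ?r]) ! k)"
      proof (cases "k < ?p")
        case True
        then show ?thesis using orth_carrier[OF oOb[OF True]] nslen by (simp add: nth_append)
      next
        case False
        then have "k = ?p" using k' by simp
        then show ?thesis using orth_carrier[OF WQ(5)] nslen by (simp add: nth_append)
      qed
    qed
    have sPL: "sqs (AsL @ [CL]) (?ns @ [d L - ?r])" using DL(1) orth_carrier[OF DL(3)] sqs_snoc by simp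
    have mapOL': "?OL' = map2 (*) ?OL (map transpose_mat (AsL @ [CL]))"
    proof (rule nth_equalityI)
      show "length ?OL' = length (map2 (*) ?OL (map transpose_mat (AsL @ [CL])))"
        using As0len AsEq by simp
      fix k assume "k < length ?OL'"
      then have k: "k \<le> ?p" by simp
      show "?OL' ! k = map2 (*) ?OL (map transpose_mat (AsL @ [CL])) ! k"
      proof (cases "k < ?p")
        case True
        have c1: "As0 ! k \<in> carrier_mat (?ns ! k) (?ns ! k)" using orth_carrier[OF oAs[OF True]] .
        have c2: "Ob (Suc k) \<in> carrier_mat (?ns ! k) (?ns ! k)" using orth_carrier[OF oOb[OF True]] .
        have "?OL' ! k = transpose_mat (As0 ! k * Ob (Suc k))" using True by (simp add: nth_append Ob'_def)
        also have "\<dots> = transpose_mat (Ob (Suc k)) * transpose_mat (As0 ! k)" using transpose_mult[OF c1 c2] .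
        finally show ?thesis using True As0len AsEq by (simp add: nth_append)
      next
        case False
        then have kp: "k = ?p" using k by simp
        have c1: "CL \<in> carrier_mat (d L - ?r) (d L - ?r)" using orth_carrier[OF DL(3)] .
        have c2: "Oh \<in> carrier_mat (d L - ?r) (d L - ?r)" using orth_carrier[OF WQ(5)] .
        have "?OL' ! k = transpose_mat (CL * Oh)" using kp by (simp add: nth_append Oh'_def)
        also have "\<dots> = transpose_mat Oh * transpose_mat CL" using transpose_mult[OF c1 c2] .
        finally show ?thesis using kp As0len AsEq by (simp add: nth_append)
      qed
    qed
    have sumL: "sum_list (?ns @ [d L - ?r]) = d L" using sns rm mL by simp
    have BLc: "blkdiag ?OL \<in> carrier_mat (d L) (d L)" using blkdiag_carrier[OF sOL] sumL by simp
    have FLc: "?FL \<in> carrier_mat (d L) (d L)" using Fb_carrier[OF permmat_carrier mL] .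
    have FLt: "transpose_mat ?FL = Fb (d L) ?m (transpose_mat (permmat ?m g))"
      using Fb_transpose[OF permmat_carrier] .
    have FLtc: "transpose_mat ?FL \<in> carrier_mat (d L) (d L)" using FLc by simp
    have BL': "blkdiag ?OL' = blkdiag ?OL * transpose_mat ?FL"
      using blkdiag_mult[OF sOL sqs_transpose[OF sPL]] mapOL' blkdiag_transpose[OF sPL] DL(4) by simp
    have QL: "Q L \<in> carrier_mat (d (L - 1)) (d (L - 1))" using WQ(2) L2 orth_carrier by fastforce
    have SL: "Sig d L \<sigma> L \<in> carrier_mat (d L) (d (L - 1))" using Sig_carrier[of d L \<sigma> L] by simp
    have TP1: "transpose_mat (permmat ?m p1) \<in> carrier_mat ?m ?m" by simp
    have TP2: "transpose_mat (permmat ?m p2) \<in> carrier_mat ?m ?m" by simp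
    have TP2g: "transpose_mat (permmat ?m (p2 \<circ> g)) \<in> carrier_mat ?m ?m" by simp
    have GP1: "Fb (d L) ?m (transpose_mat (permmat ?m p1)) \<in> carrier_mat (d L) (d L)" using Fb_carrier[OF TP1 mL] .
    have GP2: "Fb (d L) ?m (transpose_mat (permmat ?m p2)) \<in> carrier_mat (d L) (d L)" using Fb_carrier[OF TP2 mL] .
    have GP2g: "Fb (d L) ?m (transpose_mat (permmat ?m (p2 \<circ> g))) \<in> carrier_mat (d L) (d L)" using Fb_carrier[OF TP2g mL] .
    have prodT: "transpose_mat ?FL * Fb (d L) ?m (transpose_mat (permmat ?m p2)) = Fb (d L) ?m (transpose_mat (permmat ?m (p2 \<circ> g)))"
    proof -
      have "transpose_mat ?FL * Fb (d L) ?m (transpose_mat (permmat ?m p2))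
          = Fb (d L) ?m (transpose_mat (permmat ?m g) * transpose_mat (permmat ?m p2))"
        using FLt Fb_mult[of "transpose_mat (permmat ?m g)" ?m "transpose_mat (permmat ?m p2)" "d L"] mL by simp
      also have "transpose_mat (permmat ?m g) * transpose_mat (permmat ?m p2) = transpose_mat (permmat ?m p2 * permmat ?m g)"
        using transpose_mult[OF permmat_carrier permmat_carrier] by simp
      also have "permmat ?m p2 * permmat ?m g = permmat ?m (p2 \<circ> g)" using permmat_mult glt by simp
      finally show ?thesis .
    qed
    have WL: "W ! (L - 1) = blkdiag ?OL' * Fb (d L) ?m (transpose_mat Pm') * Sig d L \<sigma> L * transpose_mat (Q L)"
    proof -
      have "blkdiag ?OL' * Fb (d L) ?m (transpose_mat Pm') * Sig d L \<sigma> L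
          = (blkdiag ?OL * transpose_mat ?FL) * Fb (d L) ?m (transpose_mat (permmat ?m p2)) * Sig d L \<sigma> L"
        using BL' p2 by simp
      also have "\<dots> = blkdiag ?OL * ((transpose_mat ?FL * Fb (d L) ?m (transpose_mat (permmat ?m p2))) * Sig d L \<sigma> L)"
        using assoc_mult_mat[OF BLc FLtc GP2] assoc_mult_mat[OF BLc mult_carrier_mat[OF FLtc GP2] SL] by simp
      also have "\<dots> = blkdiag ?OL * (Fb (d L) ?m (transpose_mat (permmat ?m p1)) * Sig d L \<sigma> L)"
        using prodT E2 by simp
      also have "\<dots> = blkdiag ?OL * Fb (d L) ?m (transpose_mat (permmat ?m p1)) * Sig d L \<sigma> L"
        using assoc_mult_mat[OF BLc GP1 SL] by simp
      finally show ?thesis using WQ(8) p1 by simp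
    qed
    have ex: "\<exists>Q' Ob'' Oh''. (\<forall>l\<in>{2..L}. orth_mat (d (l - 1)) (Q' l)) \<and>
          (\<forall>k\<in>{1..?p}. orth_mat (hY ?m y k) (Ob'' k)) \<and>
          orth_mat (d 0 - ?r) (Ob'' (?p + 1)) \<and>
          orth_mat (d L - ?r) Oh'' \<and>
          W ! 0 = Q' 2 * Sig d L \<sigma> 1 * Fb (d 0) ?m Pm' * blkdiag (map Ob'' [1..<?p + 2]) \<and>
          (\<forall>l\<in>{2..L - 1}. W ! (l - 1) = Q' (l + 1) * Sig d L \<sigma> l * transpose_mat (Q' l)) \<and>
          W ! (L - 1) = blkdiag (map (\<lambda>k. transpose_mat (Ob'' k)) [1..<?p + 1] @ [transpose_mat Oh''])
                  * Fb (d L) ?m (transpose_mat Pm') * Sig d L \<sigma> L * transpose_mat (Q' L)"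
      using WQ(2) oOb'1 oOb'2 oOh' W0 WQ(7) WL
      by (intro exI[of _ Q] exI[of _ Ob'] exI[of _ Oh'] conjI) assumption+
    note ex' = ex[unfolded Fb_def]
    show "W \<in> Wset d L y \<sigma> Pm'"
      unfolding Wset_def Let_def by (rule CollectI, rule conjI[OF WQ(1) ex'])
  qed
qed

declare upt_Suc[simp]


lemma frob_nonneg: "0 \<le> frob_sq A" unfolding frob_sq_def by (intro sum_nonneg) auto

lemma Bset_info:
  assumes B: "(\<sigma>, Pm) \<in> Bset L (dmin d L) lam y"
  shows "\<sigma> \<in> carrier_vec (dmin d L)" "perm_mat (dmin d L) Pm"
    "\<forall>i j. i \<le> j \<longrightarrow> j < dmin d L \<longrightarrow> \<sigma> $ j \<le> \<sigma> $ i"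
    "\<forall>i<dmin d L. 0 \<le> \<sigma> $ i" "\<forall>i<dmin d L. \<sigma> $ i \<in> Yset L (dmin d L) lam y"
proof -
  let ?m = "dmin d L"
  note b1 = Bset_D[OF B]
  show "\<sigma> \<in> carrier_vec ?m" using conjunct1[OF b1] .
  show "perm_mat ?m Pm" using conjunct1[OF conjunct2[OF b1]] .
  show "\<forall>i j. i \<le> j \<longrightarrow> j < ?m \<longrightarrow> \<sigma> $ j \<le> \<sigma> $ i" using conjunct2[OF conjunct2[OF conjunct2[OF b1]]] .
  obtain p1 where p1: "p1 permutes {..<?m}" "Pm = permmat ?m p1"
    using perm_mat_permmat[OF conjunct1[OF conjunct2[OF b1]]] by (elim exE conjE)
  obtain a where a: "a \<in> Aset L ?m lam y" "\<sigma> = Pm *\<^sub>v a"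
    using conjunct1[OF conjunct2[OF conjunct2[OF b1]]] by (elim bexE)
  note ad = Aset_D[OF a(1)]
  have ac: "a \<in> carrier_vec ?m" using conjunct1[OF ad] .
  have aeq: "\<forall>i<?m. a $ i \<ge> 0 \<and> (a $ i) ^ (2*L - 1) - sqrt lam * y i * (a $ i) ^ (L - 1) + lam * a $ i = 0"
    using conjunct2[OF ad] .
  have sa: "\<sigma> $ i = a $ (Hilbert_Choice.inv p1 i)" if "i < ?m" for i
    using permmat_vec[OF p1(1) that ac] a(2) p1(2) by simp
  have ip1lt: "j < ?m \<Longrightarrow> Hilbert_Choice.inv p1 j < ?m" for j using permutes_lt[OF permutes_inv[OF p1(1)]] .
  show "\<forall>i<?m. 0 \<le> \<sigma> $ i" using sa ip1lt aeq by simp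
  show "\<forall>i<?m. \<sigma> $ i \<in> Yset L ?m lam y"
  proof (intro allI impI)
    fix i assume i: "i < ?m"
    define j where "j = Hilbert_Choice.inv p1 i"
    have j: "j < ?m" using ip1lt[OF i] j_def by simp
    have e: "\<sigma> $ i = a $ j" using sa[OF i] j_def by simp
    have "a $ j \<ge> 0" "(a $ j) ^ (2*L - 1) + lam * a $ j - sqrt lam * y j * (a $ j) ^ (L - 1) = 0"
      using aeq j by auto
    then show "\<sigma> $ i \<in> Yset L ?m lam y" unfolding Yset_def using e j by auto
  qed
qed

lemma W_first:
  fixes L :: nat and d :: "nat \<Rightarrow> nat" and y :: "nat \<Rightarrow> real"
  assumes L2: "L \<ge> 2"
    and ys: "\<forall>i j. i \<le> j \<longrightarrow> j < dmin d L \<longrightarrow> y j \<le> y i" and ynn: "\<forall>i<dmin d L. y i \<ge> 0"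
    and Pm: "perm_mat (dmin d L) Pm" and W: "W \<in> Wset d L y \<sigma> Pm"
  shows "\<exists>U V. orth_mat (d 1) U \<and> orth_mat (d 0) V \<and> W ! 0 = U * Sig d L \<sigma> 1 * V"
proof -
  let ?m = "dmin d L"
  let ?r = "rY ?m y" and ?p = "pY ?m y" and ?ns = "ns ?m y"
  have m0: "?m \<le> d 0" by (auto simp: dmin_def)
  obtain Q Ob Oh where WQ:
      "\<forall>l\<in>{2..L}. orth_mat (d (l - 1)) (Q l)"
      "\<forall>k\<in>{1..?p}. orth_mat (hY ?m y k) (Ob k)"
      "orth_mat (d 0 - ?r) (Ob (?p + 1))"
      "W ! 0 = Q 2 * Sig d L \<sigma> 1 * Fb (d 0) ?m Pm * blkdiag (map Ob [1..<?p + 2])"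
    using W unfolding Wset_def Let_def Fb_def by blast
  have nslen: "length ?ns = ?p" by (rule ns_length[OF ys ynn])
  have rm: "?r \<le> ?m" using r_le[OF ys ynn] .
  have sns: "sum_list ?ns = ?r" using sum_ns[OF ys ynn] .
  have oOb: "orth_mat (?ns ! k) (Ob (Suc k))" if "k < ?p" for k
    using WQ(2) that ns_nth[OF ys ynn that] by auto
  have oB: "orths (map Ob [1..<?p + 2]) (?ns @ [d 0 - ?r])"
    unfolding orths_def
  proof (intro conjI allI impI)
    show "length (map Ob [1..<?p + 2]) = length (?ns @ [d 0 - ?r])" using nslen by (simp del: upt_Suc)
    fix k assume k: "k < length (map Ob [1..<?p + 2])"
    then have k': "k \<le> ?p" by (simp del: upt_Suc)
    show "orth_mat ((?ns @ [d 0 - ?r]) ! k) (map Ob [1..<?p + 2] ! k)"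
    proof (cases "k < ?p")
      case True
      then show ?thesis using oOb[OF True] nslen by (simp add: nth_append del: upt_Suc)
    next
      case False
      then have "k = ?p" using k' by simp
      then show ?thesis using WQ(3) nslen by (simp add: nth_append del: upt_Suc)
    qed
  qed
  have sumB: "sum_list (?ns @ [d 0 - ?r]) = d 0" using sns rm m0 by simp
  have Bo: "orth_mat (d 0) (blkdiag (map Ob [1..<?p + 2]))" using blkdiag_orth[OF oB] sumB by simp
  obtain p1 where p1: "p1 permutes {..<?m}" "Pm = permmat ?m p1" using perm_mat_permmat[OF Pm] by blast
  have Fo: "orth_mat (d 0) (Fb (d 0) ?m Pm)" using Fb_orth[OF permmat_orth[OF p1(1)] m0] p1(2) by simp
  have "orth_mat (d (2 - 1)) (Q 2)" using bspec[OF WQ(1), of 2] L2 by simp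
  then have Q2: "orth_mat (d 1) (Q 2)" by simp
  have QS: "Q 2 * Sig d L \<sigma> 1 \<in> carrier_mat (d 1) (d 0)" using orth_carrier[OF Q2] Sig_carrier[of d L \<sigma> 1] by simp
  have "W ! 0 = Q 2 * Sig d L \<sigma> 1 * (Fb (d 0) ?m Pm * blkdiag (map Ob [1..<?p + 2]))"
    using WQ(4) assoc_mult_mat[OF QS orth_carrier[OF Fo] orth_carrier[OF Bo]] by simp
  then show ?thesis using Q2 orth_mult[OF Fo Bo] by blast
qed

lemma dist_bound:
  fixes L :: nat and d :: "nat \<Rightarrow> nat" and y :: "nat \<Rightarrow> real"
  assumes L2: "L \<ge> 2"
    and ys: "\<forall>i j. i \<le> j \<longrightarrow> j < dmin d L \<longrightarrow> y j \<le> y i" and ynn: "\<forall>i<dmin d L. y i \<ge> 0"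
    and dl: "\<forall>l\<in>{1..L - 1}. d l \<ge> dmin d L"
    and B1: "(\<sigma>, Pm) \<in> Bset L (dmin d L) lam y" and B2: "(\<sigma>', Pm') \<in> Bset L (dmin d L) lam y"
    and W: "W \<in> Wset d L y \<sigma> Pm" and W': "W' \<in> Wset d L y \<sigma>' Pm'"
  shows "(\<Sum>l<L. frob_sq (W ! l - W' ! l)) \<ge> (\<Sum>i<dmin d L. (\<sigma> $ i - \<sigma>' $ i)^2)"
proof -
  let ?m = "dmin d L"
  have m0: "?m \<le> d 0" by (auto simp: dmin_def)
  have m1: "?m \<le> d 1" using dl L2 by auto
  note I1 = Bset_info[OF B1] and I2 = Bset_info[OF B2]
  obtain U V where UV: "orth_mat (d 1) U" "orth_mat (d 0) V" "W ! 0 = U * Sig d L \<sigma> 1 * V"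
    using W_first[OF L2 ys ynn I1(2) W] by blast
  obtain U' V' where UV': "orth_mat (d 1) U'" "orth_mat (d 0) V'" "W' ! 0 = U' * Sig d L \<sigma>' 1 * V'"
    using W_first[OF L2 ys ynn I2(2) W'] by blast
  have "(\<Sum>i<?m. (\<sigma> $ i - \<sigma>' $ i)^2) \<le> frob_sq (W ! 0 - W' ! 0)"
    using svd_bound[OF m0 m1 UV(1) UV'(1) UV(2) UV'(2) I1(3) I1(4) I2(3) I2(4)] UV(3) UV'(3) by simp
  also have "\<dots> \<le> (\<Sum>l<L. frob_sq (W ! l - W' ! l))"
    using member_le_sum[of 0 "{..<L}" "\<lambda>l. frob_sq (W ! l - W' ! l)"] L2 frob_nonneg by simp
  finally show ?thesis .
qed

lemma Wset_nonempty:
  assumes L2: "L \<ge> 2"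
  shows "\<exists>W. W \<in> Wset d L y \<sigma> Pm"
proof -
  let ?m = "dmin d L"
  let ?r = "rY ?m y" and ?p = "pY ?m y"
  define Q :: "nat \<Rightarrow> real mat" where "Q l = 1\<^sub>m (d (l - 1))" for l
  define Ob :: "nat \<Rightarrow> real mat" where "Ob k = (if k \<le> ?p then 1\<^sub>m (hY ?m y k) else 1\<^sub>m (d 0 - ?r))" for k
  define Oh :: "real mat" where "Oh = 1\<^sub>m (d L - ?r)"
  define A where "A = Q 2 * Sig d L \<sigma> 1
                  * four_block_mat Pm (0\<^sub>m ?m (d 0 - ?m)) (0\<^sub>m (d 0 - ?m) ?m) (1\<^sub>m (d 0 - ?m))
                  * blkdiag (map Ob [1..<?p + 2])"
  define B where "B = blkdiag (map (\<lambda>k. transpose_mat (Ob k)) [1..<?p + 1] @ [transpose_mat Oh])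
                  * four_block_mat (transpose_mat Pm) (0\<^sub>m ?m (d L - ?m)) (0\<^sub>m (d L - ?m) ?m) (1\<^sub>m (d L - ?m))
                  * Sig d L \<sigma> L * transpose_mat (Q L)"
  define W where "W = map (\<lambda>i. if i = 0 then A else if i = L - 1 then B
      else Q (i + 2) * Sig d L \<sigma> (i + 1) * transpose_mat (Q (i + 1))) [0..<L]"
  have len: "length W = L" by (simp add: W_def)
  have w0: "W ! 0 = A" using L2 by (simp add: W_def del: upt_Suc)
  have wL: "W ! (L - 1) = B" using L2 by (simp add: W_def del: upt_Suc)
  have wm: "\<forall>l\<in>{2..L - 1}. W ! (l - 1) = Q (l + 1) * Sig d L \<sigma> l * transpose_mat (Q l)"
  proof
    fix l assume l: "l \<in> {2..L - 1}"
    then have "l - 1 < L" "l - 1 \<noteq> 0" "l - 1 \<noteq> L - 1" "l - 1 + 2 = l + 1" "l - 1 + 1 = l" by auto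
    then show "W ! (l - 1) = Q (l + 1) * Sig d L \<sigma> l * transpose_mat (Q l)"
      by (simp add: W_def del: upt_Suc)
  qed
  have f1: "\<forall>l\<in>{2..L}. orth_mat (d (l - 1)) (Q l)" by (simp add: Q_def orth_one)
  have f2: "\<forall>k\<in>{1..?p}. orth_mat (hY ?m y k) (Ob k)" by (simp add: Ob_def orth_one)
  have f3: "orth_mat (d 0 - ?r) (Ob (?p + 1))" by (simp add: Ob_def orth_one)
  have f4: "orth_mat (d L - ?r) Oh" by (simp add: Oh_def orth_one)
  have "W \<in> Wset d L y \<sigma> Pm"
    unfolding Wset_def Let_def
  proof (rule CollectI, rule conjI[OF len])
    show "\<exists>Q Ob Oh. (\<forall>l\<in>{2..L}. orth_mat (d (l - 1)) (Q l)) \<and>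
          (\<forall>k\<in>{1..?p}. orth_mat (hY ?m y k) (Ob k)) \<and>
          orth_mat (d 0 - ?r) (Ob (?p + 1)) \<and>
          orth_mat (d L - ?r) Oh \<and>
          W ! 0 = Q 2 * Sig d L \<sigma> 1
                  * four_block_mat Pm (0\<^sub>m ?m (d 0 - ?m)) (0\<^sub>m (d 0 - ?m) ?m) (1\<^sub>m (d 0 - ?m))
                  * blkdiag (map Ob [1..<?p + 2]) \<and>
          (\<forall>l\<in>{2..L - 1}. W ! (l - 1) = Q (l + 1) * Sig d L \<sigma> l * transpose_mat (Q l)) \<and>
          W ! (L - 1) = blkdiag (map (\<lambda>k. transpose_mat (Ob k)) [1..<?p + 1] @ [transpose_mat Oh])
                  * four_block_mat (transpose_mat Pm) (0\<^sub>m ?m (d L - ?m)) (0\<^sub>m (d L - ?m) ?m) (1\<^sub>m (d L - ?m))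
                  * Sig d L \<sigma> L * transpose_mat (Q L)"
      using f1 f2 f3 f4 w0[unfolded A_def] wm wL[unfolded B_def]
      by (intro exI[of _ Q] exI[of _ Ob] exI[of _ Oh] conjI) assumption+
  qed
  then show ?thesis by blast
qed

theorem proposition3p3:
  fixes L :: nat and d :: "nat \<Rightarrow> nat" and lam :: real and y :: "nat \<Rightarrow> real"
    and \<sigma> \<sigma>' :: "real vec" and Pm Pm' :: "real mat"
  assumes "L \<ge> 2"
    and "\<forall>l\<le>L. d l > 0"
    and "lam > 0"
    and "\<forall>i j. i \<le> j \<longrightarrow> j < dmin d L \<longrightarrow> y j \<le> y i"
    and "\<forall>i<dmin d L. y i \<ge> 0"
    and "\<forall>l\<in>{1..L - 1}. d l \<ge> dmin d L"
    and "(\<sigma>, Pm) \<in> Bset L (dmin d L) lam y"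
    and "(\<sigma>', Pm') \<in> Bset L (dmin d L) lam y"
  shows "(Wset d L y \<sigma> Pm = Wset d L y \<sigma>' Pm' \<longleftrightarrow> \<sigma> = \<sigma>') \<and>
         (\<sigma> \<noteq> \<sigma>' \<longrightarrow>
            set_dist L (Wset d L y \<sigma> Pm) (Wset d L y \<sigma>' Pm') \<ge> delta_sigma L (dmin d L) lam y)"
proof -
  note L2 = assms(1) and lam = assms(3) and ys = assms(4) and ynn = assms(5) and dl = assms(6)
    and B1 = assms(7) and B2 = assms(8)
  let ?m = "dmin d L"
  note I1 = Bset_info[OF B1] and I2 = Bset_info[OF B2]
  have diff: "\<exists>i<?m. \<sigma> $ i \<noteq> \<sigma>' $ i" if ne: "\<sigma> \<noteq> \<sigma>'"
  proof (rule ccontr)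
    assume "\<not> ?thesis"
    then have "\<sigma> = \<sigma>'" using I1(1) I2(1) by (intro eq_vecI) auto
    then show False using ne by simp
  qed
  have pos: "0 < (\<Sum>i<?m. (\<sigma> $ i - \<sigma>' $ i)^2)" if ne: "\<sigma> \<noteq> \<sigma>'"
  proof -
    obtain i where i: "i < ?m" "\<sigma> $ i \<noteq> \<sigma>' $ i" using diff[OF ne] by blast
    have "0 < (\<sigma> $ i - \<sigma>' $ i)^2" using i by simp
    also have "\<dots> \<le> (\<Sum>i<?m. (\<sigma> $ i - \<sigma>' $ i)^2)"
      using member_le_sum[of i "{..<?m}" "\<lambda>i. (\<sigma> $ i - \<sigma>' $ i)^2"] i by simp
    finally show ?thesis .
  qed
  have part1: "Wset d L y \<sigma> Pm = Wset d L y \<sigma>' Pm' \<longleftrightarrow> \<sigma> = \<sigma>'"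
  proof
    assume eq: "Wset d L y \<sigma> Pm = Wset d L y \<sigma>' Pm'"
    show "\<sigma> = \<sigma>'"
    proof (rule ccontr)
      assume ne: "\<sigma> \<noteq> \<sigma>'"
      obtain W where W: "W \<in> Wset d L y \<sigma> Pm" using Wset_nonempty[OF L2] by blast
      then have W': "W \<in> Wset d L y \<sigma>' Pm'" using eq by simp
      have "(\<Sum>l<L. frob_sq (W ! l - W ! l)) \<ge> (\<Sum>i<?m. (\<sigma> $ i - \<sigma>' $ i)^2)"
        using dist_bound[OF L2 ys ynn dl B1 B2 W W'] .
      moreover have "(\<Sum>l<L. frob_sq (W ! l - W ! l)) = 0"
        unfolding frob_sq_def by simp
      ultimately show False using pos[OF ne] by simp
    qed
  next
    assume eq: "\<sigma> = \<sigma>'"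
    have B2': "(\<sigma>, Pm') \<in> Bset L ?m lam y" using B2 eq by simp
    show "Wset d L y \<sigma> Pm = Wset d L y \<sigma>' Pm'"
      using Wset_sub[OF L2 lam ys ynn B1 B2'] Wset_sub[OF L2 lam ys ynn B2' B1] eq by simp
  qed
  have part2: "set_dist L (Wset d L y \<sigma> Pm) (Wset d L y \<sigma>' Pm') \<ge> delta_sigma L ?m lam y"
    if ne: "\<sigma> \<noteq> \<sigma>'"
  proof -
    obtain i where i: "i < ?m" "\<sigma> $ i \<noteq> \<sigma>' $ i" using diff[OF ne] by blast
    let ?T = "{\<bar>x - x'\<bar> | x x'. x \<in> Yset L ?m lam y \<and> x' \<in> Yset L ?m lam y \<and> x \<noteq> x'}"
    have inT: "\<bar>\<sigma> $ i - \<sigma>' $ i\<bar> \<in> ?T" using I1(5) I2(5) i by blast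
    have bddT: "bdd_below ?T" by (rule bdd_belowI[of _ 0]) auto
    have delta: "delta_sigma L ?m lam y \<le> \<bar>\<sigma> $ i - \<sigma>' $ i\<bar>"
      unfolding delta_sigma_def using cInf_lower[OF inT bddT] .
    let ?D = "{sqrt (\<Sum>l<L. frob_sq (W ! l - W' ! l)) | W W'. W \<in> Wset d L y \<sigma> Pm \<and> W' \<in> Wset d L y \<sigma>' Pm'}"
    obtain W0 where W0: "W0 \<in> Wset d L y \<sigma> Pm" using Wset_nonempty[OF L2] by blast
    obtain W0' where W0': "W0' \<in> Wset d L y \<sigma>' Pm'" using Wset_nonempty[OF L2] by blast
    have neD: "?D \<noteq> {}" using W0 W0' by blast
    have lowD: "\<forall>z\<in>?D. \<bar>\<sigma> $ i - \<sigma>' $ i\<bar> \<le> z"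
    proof
      fix z assume "z \<in> ?D"
      then obtain W W' where WW: "W \<in> Wset d L y \<sigma> Pm" "W' \<in> Wset d L y \<sigma>' Pm'"
        "z = sqrt (\<Sum>l<L. frob_sq (W ! l - W' ! l))" by blast
      have "(\<sigma> $ i - \<sigma>' $ i)^2 \<le> (\<Sum>i<?m. (\<sigma> $ i - \<sigma>' $ i)^2)"
        using member_le_sum[of i "{..<?m}" "\<lambda>i. (\<sigma> $ i - \<sigma>' $ i)^2"] i by simp
      also have "\<dots> \<le> (\<Sum>l<L. frob_sq (W ! l - W' ! l))"
        using dist_bound[OF L2 ys ynn dl B1 B2 WW(1) WW(2)] .
      finally have "sqrt ((\<sigma> $ i - \<sigma>' $ i)^2) \<le> z" using WW(3) real_sqrt_le_mono by blast
      then show "\<bar>\<sigma> $ i - \<sigma>' $ i\<bar> \<le> z" by simp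
    qed
    have "\<bar>\<sigma> $ i - \<sigma>' $ i\<bar> \<le> Inf ?D" using cInf_greatest[OF neD] lowD by blast
    then show ?thesis unfolding set_dist_def using delta by linarith
  qed
  show ?thesis using part1 part2 by blast
qed


end
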